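(* For groups with topology $G_1,G_2$, the canonical epimorphism $k:F_M(G_1\sqcup G_2)\to\tau(G_1)\ast\tau(G_2)$, which sends each generator $g\in G_i$ to the element $g$ of the factor $\tau(G_i)$, is a topological quotient map.
   Context: A group with topology is a group with an arbitrary topology. $G_1\sqcup G_2$ is the topological disjoint union. $F_M(S)$ is the free (Markov) topological group on a space $S$. For a group with topology $G$, $\tau(G)$ is $G$ with the quotient topology with respect to the multiplication epimorphism $m_G:F_M(G)\to G$ sending each generator $g$ to $g$. For topological groups $H_1,H_2$, $H_1\ast H_2$ is the free topological product, i.e. the coproduct in the category of topological groups (underlying group the free product). *)

theory Defs
  imports "HOL-Analysis.Product_Topology" "HOL-Algebra.Group"
begin

text \<open>A group with topology is a group G together with an arbitrary topology T
  with topspace T = carrier G.  A group topology is one for which multiplication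
  and inversion are continuous (no separation axiom required).\<close>

definition group_topology :: "'a monoid \<Rightarrow> 'a topology \<Rightarrow> bool" where
  "group_topology G T \<longleftrightarrow>
     topspace T = carrier G \<and>
     continuous_map (prod_topology T T) T (\<lambda>(x, y). x \<otimes>\<^bsub>G\<^esub> y) \<and>
     continuous_map T T (\<lambda>x. inv\<^bsub>G\<^esub> x)"

definition finest_group_topology :: "'a monoid \<Rightarrow> ('a topology \<Rightarrow> bool) \<Rightarrow> 'a topology" where
  "finest_group_topology G P =
     (THE T. group_topology G T \<and> P T \<and>
        (\<forall>T'. group_topology G T' \<and> P T' \<longrightarrow> (\<forall>U. openin T' U \<longrightarrow> openin T U)))"

definition quotient_topology :: "'a topology \<Rightarrow> ('a \<Rightarrow> 'b) \<Rightarrow> 'b set \<Rightarrow> 'b topology" where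
  "quotient_topology X f Y =
     topology (\<lambda>U. U \<subseteq> Y \<and> openin X {x \<in> topspace X. f x \<in> U})"

definition disjoint_union_topology :: "'a topology \<Rightarrow> 'b topology \<Rightarrow> ('a + 'b) topology" where
  "disjoint_union_topology T1 T2 =
     topology (\<lambda>U. U \<subseteq> Inl ` topspace T1 \<union> Inr ` topspace T2 \<and>
                   openin T1 (Inl -` U) \<and> openin T2 (Inr -` U))"

text \<open>Letters are pairs (x, b): b = True means the generator x, b = False its inverse.\<close>

fun fg_reduced :: "('a \<times> bool) list \<Rightarrow> bool" where
  "fg_reduced ((x, b) # (y, c) # ws) \<longleftrightarrow> \<not> (x = y \<and> b \<noteq> c) \<and> fg_reduced ((y, c) # ws)"
| "fg_reduced _ \<longleftrightarrow> True"

definition fg_cons :: "'a \<times> bool \<Rightarrow> ('a \<times> bool) list \<Rightarrow> ('a \<times> bool) list" where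
  "fg_cons l ws = (case ws of [] \<Rightarrow> [l]
     | l' # ws' \<Rightarrow> if fst l = fst l' \<and> snd l \<noteq> snd l' then ws' else l # ws)"

definition free_group :: "'a set \<Rightarrow> ('a \<times> bool) list monoid" where
  "free_group S =
     \<lparr>carrier = {w. fst ` set w \<subseteq> S \<and> fg_reduced w},
      mult = (\<lambda>u v. foldr fg_cons u v),
      one = []\<rparr>"

definition fg_gen :: "'a \<Rightarrow> ('a \<times> bool) list" where
  "fg_gen x = [(x, True)]"

definition free_ext :: "'b monoid \<Rightarrow> ('a \<Rightarrow> 'b) \<Rightarrow> ('a \<times> bool) list \<Rightarrow> 'b" where
  "free_ext H f w =
     foldr (\<lambda>(x, b) acc. (if b then f x else inv\<^bsub>H\<^esub> (f x)) \<otimes>\<^bsub>H\<^esub> acc) w \<one>\<^bsub>H\<^esub>"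

definition FM_top :: "'a topology \<Rightarrow> ('a \<times> bool) list topology" where
  "FM_top S = finest_group_topology (free_group (topspace S)) (\<lambda>T. continuous_map S T fg_gen)"

definition tau_top :: "'a monoid \<Rightarrow> 'a topology \<Rightarrow> 'a topology" where
  "tau_top G T = quotient_topology (FM_top T) (free_ext G id) (carrier G)"

definition fp_letter_ok :: "'a monoid \<Rightarrow> 'b monoid \<Rightarrow> 'a + 'b \<Rightarrow> bool" where
  "fp_letter_ok G1 G2 l = (case l of
      Inl a \<Rightarrow> a \<in> carrier G1 \<and> a \<noteq> \<one>\<^bsub>G1\<^esub>
    | Inr b \<Rightarrow> b \<in> carrier G2 \<and> b \<noteq> \<one>\<^bsub>G2\<^esub>)"

definition fp_cons :: "'a monoid \<Rightarrow> 'b monoid \<Rightarrow> 'a + 'b \<Rightarrow> ('a + 'b) list \<Rightarrow> ('a + 'b) list" where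
  "fp_cons G1 G2 l ws = (case (l, ws) of
      (Inl a, Inl a' # ws') \<Rightarrow>
         (if a \<otimes>\<^bsub>G1\<^esub> a' = \<one>\<^bsub>G1\<^esub> then ws' else Inl (a \<otimes>\<^bsub>G1\<^esub> a') # ws')
    | (Inr b, Inr b' # ws') \<Rightarrow>
         (if b \<otimes>\<^bsub>G2\<^esub> b' = \<one>\<^bsub>G2\<^esub> then ws' else Inr (b \<otimes>\<^bsub>G2\<^esub> b') # ws')
    | _ \<Rightarrow> l # ws)"

definition free_product :: "'a monoid \<Rightarrow> 'b monoid \<Rightarrow> ('a + 'b) list monoid" where
  "free_product G1 G2 =
     \<lparr>carrier = {ws. (\<forall>l \<in> set ws. fp_letter_ok G1 G2 l) \<and>
                     (\<forall>i. Suc i < length ws \<longrightarrow> isl (ws ! i) \<noteq> isl (ws ! Suc i))},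
      mult = (\<lambda>u v. foldr (fp_cons G1 G2) u v),
      one = []\<rparr>"

definition fp_inl :: "'a monoid \<Rightarrow> 'a \<Rightarrow> ('a + 'b) list" where
  "fp_inl G1 a = (if a = \<one>\<^bsub>G1\<^esub> then [] else [Inl a])"

definition fp_inr :: "'b monoid \<Rightarrow> 'b \<Rightarrow> ('a + 'b) list" where
  "fp_inr G2 b = (if b = \<one>\<^bsub>G2\<^esub> then [] else [Inr b])"

text \<open>Free topological product H1 * H2 of the topological groups (G1,T1), (G2,T2):
  the finest group topology on the free product making both canonical
  inclusions continuous (the coproduct in the category of topological groups).\<close>

definition free_top_product ::
  "'a monoid \<Rightarrow> 'a topology \<Rightarrow> 'b monoid \<Rightarrow> 'b topology \<Rightarrow> ('a + 'b) list topology" where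
  "free_top_product G1 T1 G2 T2 =
     finest_group_topology (free_product G1 G2)
       (\<lambda>T. continuous_map T1 T (fp_inl G1) \<and> continuous_map T2 T (fp_inr G2))"

end

theory Submission
  imports Defs
begin


lemma fg_reduced_Cons_iff:
  "fg_reduced (a # w) \<longleftrightarrow> (case w of [] \<Rightarrow> True | b # _ \<Rightarrow> \<not> (fst a = fst b \<and> snd a \<noteq> snd b)) \<and> fg_reduced w"
  by (cases a; cases w; auto)

lemma fg_reduced_tl: "fg_reduced (a # w) \<Longrightarrow> fg_reduced w"
  by (simp add: fg_reduced_Cons_iff)

lemma fg_cons_reduced: "fg_reduced w \<Longrightarrow> fg_reduced (fg_cons l w)"
  by (cases w) (auto simp: fg_cons_def fg_reduced_Cons_iff)

lemma fg_cons_letters: "fst ` set (fg_cons l w) \<subseteq> insert (fst l) (fst ` set w)"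
  by (cases w) (auto simp: fg_cons_def)

lemma fg_cons_noncancel: "fg_reduced (a # w) \<Longrightarrow> fg_cons a w = a # w"
proof (cases w)
  case (Cons b w')
  assume "fg_reduced (a # w)"
  then have "\<not> (fst a = fst b \<and> snd a \<noteq> snd b)" using Cons
    by (cases a; cases b) simp
  then show ?thesis using Cons by (simp add: fg_cons_def)
qed (simp add: fg_cons_def)

lemma fg_cons_cancel0:
  assumes "fg_reduced w"
  shows "fg_cons (x, b) (fg_cons (x, \<not> b) w) = w"
proof (cases w)
  case Nil then show ?thesis by (simp add: fg_cons_def)
next
  case (Cons a w')
  obtain y c where a: "a = (y, c)" by fastforce
  show ?thesis
  proof (cases w')
    case Nil
    then show ?thesis using Cons a by (auto simp: fg_cons_def)
  next
    case Cons2: (Cons a' w'')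
    obtain z d where a': "a' = (z, d)" by fastforce
    have "\<not> (y = z \<and> c \<noteq> d)" using assms Cons Cons2 a a' by simp
    then show ?thesis using Cons Cons2 a a' by (auto simp: fg_cons_def)
  qed
qed

lemma fg_cons_cancel:
  assumes "fg_reduced w"
  shows "fg_cons l (fg_cons (fst l, \<not> snd l) w) = w"
  using fg_cons_cancel0[OF assms, of "fst l" "snd l"] by simp

lemma foldr_fg_reduced: "fg_reduced w \<Longrightarrow> fg_reduced (foldr fg_cons u w)"
  by (induction u) (auto intro: fg_cons_reduced)

lemma foldr_fg_letters: "fst ` set u \<subseteq> S \<Longrightarrow> fst ` set w \<subseteq> S \<Longrightarrow> fst ` set (foldr fg_cons u w) \<subseteq> S"
proof (induction u)
  case (Cons a u)
  then have IH: "fst ` set (foldr fg_cons u w) \<subseteq> S" and a: "fst a \<in> S" by auto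
  have "fst ` set (fg_cons a (foldr fg_cons u w)) \<subseteq> S"
    by (rule order_trans[OF fg_cons_letters[of a]]) (use IH a in blast)
  then show ?case by simp
qed simp

lemma foldr_fg_cons:
  assumes "fg_reduced w"
  shows "foldr fg_cons (fg_cons l u) w = fg_cons l (foldr fg_cons u w)"
proof (cases u)
  case Nil then show ?thesis by (simp add: fg_cons_def)
next
  case (Cons a u')
  show ?thesis
  proof (cases "fst l = fst a \<and> snd l \<noteq> snd a")
    case True
    then have a: "a = (fst l, \<not> snd l)" by (auto simp: prod_eq_iff)
    have c: "fg_cons l u = u'" using True Cons by (simp add: fg_cons_def)
    have "foldr fg_cons (fg_cons l u) w = foldr fg_cons u' w" by (simp only: c)
    also have "\<dots> = fg_cons l (fg_cons (fst l, \<not> snd l) (foldr fg_cons u' w))"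
      by (rule fg_cons_cancel[OF foldr_fg_reduced[OF assms], symmetric])
    also have "\<dots> = fg_cons l (foldr fg_cons u w)" by (simp only: Cons a foldr_Cons o_apply)
    finally show ?thesis .
  next
    case False
    then have "fg_cons l u = l # u" using Cons by (simp add: fg_cons_def)
    then show ?thesis by (simp only: foldr_Cons o_apply)
  qed
qed

lemma foldr_fg_assoc:
  assumes "fg_reduced w"
  shows "foldr fg_cons (foldr fg_cons u v) w = foldr fg_cons u (foldr fg_cons v w)"
  by (induction u) (simp_all add: foldr_fg_cons[OF assms])

lemma foldr_fg_Nil: "fg_reduced w \<Longrightarrow> foldr fg_cons w [] = w"
proof (induction w)
  case (Cons a w)
  have "fg_reduced w" using Cons.prems by (rule fg_reduced_tl)
  with Cons.IH have "foldr fg_cons w [] = w" by blast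
  then show ?case using fg_cons_noncancel[OF Cons.prems] by (simp only: foldr_Cons o_apply)
qed simp

definition fg_invw :: "('a \<times> bool) list \<Rightarrow> ('a \<times> bool) list" where
  "fg_invw w = rev (map (\<lambda>(x, b). (x, \<not> b)) w)"

lemma fg_invw_Cons: "fg_invw (a # w) = fg_invw w @ [(fst a, \<not> snd a)]"
  by (cases a) (simp add: fg_invw_def)

lemma fg_invw_letters: "fst ` set (fg_invw w) = fst ` set w"
  by (simp add: fg_invw_def image_image split_def)

lemma fg_invw_left: "fg_reduced w \<Longrightarrow> foldr fg_cons (fg_invw w) w = []"
proof (induction w)
  case Nil then show ?case by (simp add: fg_invw_def)
next
  case (Cons a w)
  have red: "fg_reduced w" using Cons.prems by (rule fg_reduced_tl)
  have c: "fg_cons (fst a, \<not> snd a) (a # w) = w"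
    by (simp add: fg_cons_def)
  have "foldr fg_cons (fg_invw (a # w)) (a # w) = foldr fg_cons (fg_invw w) (foldr fg_cons [(fst a, \<not> snd a)] (a # w))"
    by (simp only: fg_invw_Cons foldr_append o_apply)
  also have "\<dots> = foldr fg_cons (fg_invw w) w" by (simp only: foldr_Cons foldr_Nil o_apply id_apply c)
  also have "\<dots> = []" using Cons.IH red by blast
  finally show ?case .
qed

lemma fg_mult: "x \<otimes>\<^bsub>free_group S\<^esub> y = foldr fg_cons x y"
  by (simp add: free_group_def)
lemma fg_one: "\<one>\<^bsub>free_group S\<^esub> = []"
  by (simp add: free_group_def)
lemma fg_carrier: "x \<in> carrier (free_group S) \<longleftrightarrow> fst ` set x \<subseteq> S \<and> fg_reduced x"
  by (simp add: free_group_def)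

lemma free_group_is_group: "group (free_group S)"
proof (rule groupI)
  show "\<exists>y\<in>carrier (free_group S). y \<otimes>\<^bsub>free_group S\<^esub> x = \<one>\<^bsub>free_group S\<^esub>"
    if "x \<in> carrier (free_group S)" for x
  proof -
    have x: "fst ` set x \<subseteq> S" "fg_reduced x" using that by (simp_all add: free_group_def)
    define y where "y = foldr fg_cons (fg_invw x) []"
    have "fst ` set y \<subseteq> S" unfolding y_def
      by (rule foldr_fg_letters) (simp_all add: fg_invw_letters x)
    moreover have "fg_reduced y" unfolding y_def by (rule foldr_fg_reduced) simp
    ultimately have yc: "y \<in> carrier (free_group S)" by (simp add: free_group_def)
    have "foldr fg_cons y x = []"
      unfolding y_def foldr_fg_assoc[OF x(2)] using fg_invw_left[OF x(2)] by simp
    then have "y \<otimes>\<^bsub>free_group S\<^esub> x = \<one>\<^bsub>free_group S\<^esub>" by (simp add: fg_mult fg_one)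
    with yc show ?thesis by blast
  qed
next
  fix x y assume "x \<in> carrier (free_group S)" "y \<in> carrier (free_group S)"
  then show "x \<otimes>\<^bsub>free_group S\<^esub> y \<in> carrier (free_group S)"
  proof -
    have "fst ` set (foldr fg_cons x y) \<subseteq> S"
    proof -
      have "fst ` set x \<subseteq> S" "fst ` set y \<subseteq> S"
        using \<open>x \<in> _\<close> \<open>y \<in> _\<close> by (simp_all add: free_group_def)
      then show ?thesis by (rule foldr_fg_letters)
    qed
    moreover have "fg_reduced (foldr fg_cons x y)"
      using foldr_fg_reduced[of y x] \<open>y \<in> _\<close> by (simp add: fg_carrier)
    ultimately show ?thesis by (simp add: fg_carrier fg_mult)
  qed
next
  show "\<one>\<^bsub>free_group S\<^esub> \<in> carrier (free_group S)" by (simp add: free_group_def)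
next
  fix x assume "x \<in> carrier (free_group S)"
  show "\<one>\<^bsub>free_group S\<^esub> \<otimes>\<^bsub>free_group S\<^esub> x = x" by (simp add: fg_mult fg_one)
next
  fix x y z assume "x \<in> carrier (free_group S)" "y \<in> carrier (free_group S)" "z \<in> carrier (free_group S)"
  then have "fg_reduced z" by (simp add: fg_carrier)
  then show "x \<otimes>\<^bsub>free_group S\<^esub> y \<otimes>\<^bsub>free_group S\<^esub> z = x \<otimes>\<^bsub>free_group S\<^esub> (y \<otimes>\<^bsub>free_group S\<^esub> z)"
    unfolding fg_mult by (rule foldr_fg_assoc)
qed




lemma fp_cons_simps:
  "fp_cons G1 G2 l [] = [l]"
  "fp_cons G1 G2 (Inl a) (Inl a' # ws) = (if a \<otimes>\<^bsub>G1\<^esub> a' = \<one>\<^bsub>G1\<^esub> then ws else Inl (a \<otimes>\<^bsub>G1\<^esub> a') # ws)"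
  "fp_cons G1 G2 (Inr b) (Inr b' # ws) = (if b \<otimes>\<^bsub>G2\<^esub> b' = \<one>\<^bsub>G2\<^esub> then ws else Inr (b \<otimes>\<^bsub>G2\<^esub> b') # ws)"
  "fp_cons G1 G2 (Inl a) (Inr b # ws) = Inl a # Inr b # ws"
  "fp_cons G1 G2 (Inr b) (Inl a # ws) = Inr b # Inl a # ws"
  by (cases l; simp add: fp_cons_def)+

lemma fp_carrier_Nil: "[] \<in> carrier (free_product G1 G2)"
  by (simp add: free_product_def)

lemma fp_mult: "u \<otimes>\<^bsub>free_product G1 G2\<^esub> v = foldr (fp_cons G1 G2) u v"
  by (simp add: free_product_def)

lemma fp_one: "\<one>\<^bsub>free_product G1 G2\<^esub> = []"
  by (simp add: free_product_def)

lemma fp_carrier_Cons: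
  "l # ws \<in> carrier (free_product G1 G2) \<longleftrightarrow>
     fp_letter_ok G1 G2 l \<and> ws \<in> carrier (free_product G1 G2) \<and> (ws \<noteq> [] \<longrightarrow> isl l \<noteq> isl (hd ws))"
proof -
  have "(\<forall>i. Suc i < length (l # ws) \<longrightarrow> isl ((l # ws) ! i) \<noteq> isl ((l # ws) ! Suc i)) \<longleftrightarrow>
        (ws \<noteq> [] \<longrightarrow> isl l \<noteq> isl (hd ws)) \<and> (\<forall>i. Suc i < length ws \<longrightarrow> isl (ws ! i) \<noteq> isl (ws ! Suc i))"
    (is "?A \<longleftrightarrow> ?B")
  proof
    assume A: ?A
    show ?B
    proof
      show "ws \<noteq> [] \<longrightarrow> isl l \<noteq> isl (hd ws)" using A[rule_format, of 0] by (cases ws) auto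
      show "\<forall>i. Suc i < length ws \<longrightarrow> isl (ws ! i) \<noteq> isl (ws ! Suc i)"
        using A by (metis Suc_less_eq length_Cons nth_Cons_Suc)
    qed
  next
    assume B: ?B
    show ?A
    proof (intro allI impI)
      fix i assume "Suc i < length (l # ws)"
      then show "isl ((l # ws) ! i) \<noteq> isl ((l # ws) ! Suc i)"
        using B by (cases i) (auto simp: hd_conv_nth)
    qed
  qed
  then show ?thesis by (auto simp: free_product_def)
qed

lemma fp_letter_ok_Inl: "fp_letter_ok G1 G2 (Inl a) \<longleftrightarrow> a \<in> carrier G1 \<and> a \<noteq> \<one>\<^bsub>G1\<^esub>"
  by (simp add: fp_letter_ok_def)

lemma fp_cons_Inl_noncancel:
  assumes "ws = [] \<or> \<not> isl (hd ws)"
  shows "fp_cons G1 G2 (Inl a) ws = Inl a # ws"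
proof (cases ws)
  case (Cons l ws')
  then show ?thesis using assms by (cases l) (simp_all add: fp_cons_simps)
qed (simp add: fp_cons_simps)

lemma fp_cons_Inl_closed:
  assumes G1: "group G1" and a: "a \<in> carrier G1" "a \<noteq> \<one>\<^bsub>G1\<^esub>" and ws: "ws \<in> carrier (free_product G1 G2)"
  shows "fp_cons G1 G2 (Inl a) ws \<in> carrier (free_product G1 G2)"
proof (cases ws)
  case Nil then show ?thesis using a by (simp add: fp_cons_simps fp_carrier_Cons fp_carrier_Nil fp_letter_ok_def)
next
  case (Cons l ws')
  show ?thesis
  proof (cases l)
    case (Inl c)
    have c: "c \<in> carrier G1" and ws': "ws' \<in> carrier (free_product G1 G2)"
      and alt: "ws' \<noteq> [] \<longrightarrow> \<not> isl (hd ws')"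
      using ws Cons Inl by (auto simp: fp_carrier_Cons fp_letter_ok_def)
    show ?thesis
    proof (cases "a \<otimes>\<^bsub>G1\<^esub> c = \<one>\<^bsub>G1\<^esub>")
      case True then show ?thesis using Cons Inl ws' by (simp add: fp_cons_simps)
    next
      case False
      have "Inl (a \<otimes>\<^bsub>G1\<^esub> c) # ws' \<in> carrier (free_product G1 G2)"
        using False ws' alt a c monoid.m_closed[OF group.is_monoid[OF G1]] by (simp add: fp_carrier_Cons fp_letter_ok_def)
      then show ?thesis using Cons Inl False by (simp add: fp_cons_simps)
    qed
  next
    case (Inr b)
    then show ?thesis using Cons a ws by (simp add: fp_cons_simps fp_carrier_Cons fp_letter_ok_def)
  qed
qed

lemma fp_action_Inl:
  assumes G1: "group G1" and a: "a \<in> carrier G1" "a \<noteq> \<one>\<^bsub>G1\<^esub>" and a': "a' \<in> carrier G1"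
    and ws: "ws \<in> carrier (free_product G1 G2)"
  shows "fp_cons G1 G2 (Inl a) (fp_cons G1 G2 (Inl a') ws) =
           (if a \<otimes>\<^bsub>G1\<^esub> a' = \<one>\<^bsub>G1\<^esub> then ws else fp_cons G1 G2 (Inl (a \<otimes>\<^bsub>G1\<^esub> a')) ws)"
proof (cases ws)
  case Nil then show ?thesis by (simp add: fp_cons_simps)
next
  case (Cons l ws')
  show ?thesis
  proof (cases l)
    case (Inr b)
    then show ?thesis using Cons by (simp add: fp_cons_simps)
  next
    case (Inl c)
    have c: "c \<in> carrier G1" and cne: "c \<noteq> \<one>\<^bsub>G1\<^esub>"
      and alt: "ws' = [] \<or> \<not> isl (hd ws')"
      using ws Cons Inl by (auto simp: fp_carrier_Cons fp_letter_ok_def)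
    have nc: "fp_cons G1 G2 (Inl x) ws' = Inl x # ws'" for x
      using alt by (rule fp_cons_Inl_noncancel)
    have assoc: "a \<otimes>\<^bsub>G1\<^esub> (a' \<otimes>\<^bsub>G1\<^esub> c) = (a \<otimes>\<^bsub>G1\<^esub> a') \<otimes>\<^bsub>G1\<^esub> c"
      using group.is_monoid[OF G1] a a' c by (simp add: monoid.m_assoc)
    show ?thesis
    proof (cases "a' \<otimes>\<^bsub>G1\<^esub> c = \<one>\<^bsub>G1\<^esub>")
      case True
      have e1: "fp_cons G1 G2 (Inl a') ws = ws'" using True Cons Inl by (simp add: fp_cons_simps)
      have e2: "(a \<otimes>\<^bsub>G1\<^esub> a') \<otimes>\<^bsub>G1\<^esub> c = a"
        using assoc True a group.is_monoid[OF G1] by (simp add: monoid.r_one)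
      show ?thesis
      proof (cases "a \<otimes>\<^bsub>G1\<^esub> a' = \<one>\<^bsub>G1\<^esub>")
        case True
        then have "a = c" using e2 c group.is_monoid[OF G1] by (simp add: monoid.l_one)
        then show ?thesis using e1 nc True Cons Inl by simp
      next
        case False
        then show ?thesis using e1 nc Cons Inl e2 a by (simp add: fp_cons_simps)
      qed
    next
      case False
      have e1: "fp_cons G1 G2 (Inl a') ws = Inl (a' \<otimes>\<^bsub>G1\<^esub> c) # ws'" using False Cons Inl by (simp add: fp_cons_simps)
      show ?thesis
      proof (cases "a \<otimes>\<^bsub>G1\<^esub> a' = \<one>\<^bsub>G1\<^esub>")
        case True
        then have "a \<otimes>\<^bsub>G1\<^esub> (a' \<otimes>\<^bsub>G1\<^esub> c) = c" using assoc c group.is_monoid[OF G1] by (simp add: monoid.l_one)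
        then show ?thesis using e1 True Cons Inl cne by (simp add: fp_cons_simps)
      next
        case False
        then show ?thesis using e1 assoc Cons Inl by (simp add: fp_cons_simps)
      qed
    qed
  qed
qed

lemma fp_letter_ok_Inr: "fp_letter_ok G1 G2 (Inr a) \<longleftrightarrow> a \<in> carrier G2 \<and> a \<noteq> \<one>\<^bsub>G2\<^esub>"
  by (simp add: fp_letter_ok_def)

lemma fp_cons_Inr_noncancel:
  assumes "ws = [] \<or> isl (hd ws)"
  shows "fp_cons G1 G2 (Inr a) ws = Inr a # ws"
proof (cases ws)
  case (Cons l ws')
  then show ?thesis using assms by (cases l) (simp_all add: fp_cons_simps)
qed (simp add: fp_cons_simps)

lemma fp_cons_Inr_closed:
  assumes G2: "group G2" and a: "a \<in> carrier G2" "a \<noteq> \<one>\<^bsub>G2\<^esub>" and ws: "ws \<in> carrier (free_product G1 G2)"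
  shows "fp_cons G1 G2 (Inr a) ws \<in> carrier (free_product G1 G2)"
proof (cases ws)
  case Nil then show ?thesis using a by (simp add: fp_cons_simps fp_carrier_Cons fp_carrier_Nil fp_letter_ok_def)
next
  case (Cons l ws')
  show ?thesis
  proof (cases l)
    case (Inr c)
    have c: "c \<in> carrier G2" and ws': "ws' \<in> carrier (free_product G1 G2)"
      and alt: "ws' \<noteq> [] \<longrightarrow> isl (hd ws')"
      using ws Cons Inr by (auto simp: fp_carrier_Cons fp_letter_ok_def)
    show ?thesis
    proof (cases "a \<otimes>\<^bsub>G2\<^esub> c = \<one>\<^bsub>G2\<^esub>")
      case True then show ?thesis using Cons Inr ws' by (simp add: fp_cons_simps)
    next
      case False
      have "Inr (a \<otimes>\<^bsub>G2\<^esub> c) # ws' \<in> carrier (free_product G1 G2)"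
        using False ws' alt a c monoid.m_closed[OF group.is_monoid[OF G2]] by (simp add: fp_carrier_Cons fp_letter_ok_def)
      then show ?thesis using Cons Inr False by (simp add: fp_cons_simps)
    qed
  next
    case (Inl b)
    then show ?thesis using Cons a ws by (simp add: fp_cons_simps fp_carrier_Cons fp_letter_ok_def)
  qed
qed

lemma fp_action_Inr:
  assumes G2: "group G2" and a: "a \<in> carrier G2" "a \<noteq> \<one>\<^bsub>G2\<^esub>" and a': "a' \<in> carrier G2"
    and ws: "ws \<in> carrier (free_product G1 G2)"
  shows "fp_cons G1 G2 (Inr a) (fp_cons G1 G2 (Inr a') ws) =
           (if a \<otimes>\<^bsub>G2\<^esub> a' = \<one>\<^bsub>G2\<^esub> then ws else fp_cons G1 G2 (Inr (a \<otimes>\<^bsub>G2\<^esub> a')) ws)"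
proof (cases ws)
  case Nil then show ?thesis by (simp add: fp_cons_simps)
next
  case (Cons l ws')
  show ?thesis
  proof (cases l)
    case (Inl b)
    then show ?thesis using Cons by (simp add: fp_cons_simps)
  next
    case (Inr c)
    have c: "c \<in> carrier G2" and cne: "c \<noteq> \<one>\<^bsub>G2\<^esub>"
      and alt: "ws' = [] \<or> isl (hd ws')"
      using ws Cons Inr by (auto simp: fp_carrier_Cons fp_letter_ok_def)
    have nc: "fp_cons G1 G2 (Inr x) ws' = Inr x # ws'" for x
      using alt by (rule fp_cons_Inr_noncancel)
    have assoc: "a \<otimes>\<^bsub>G2\<^esub> (a' \<otimes>\<^bsub>G2\<^esub> c) = (a \<otimes>\<^bsub>G2\<^esub> a') \<otimes>\<^bsub>G2\<^esub> c"
      using group.is_monoid[OF G2] a a' c by (simp add: monoid.m_assoc)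
    show ?thesis
    proof (cases "a' \<otimes>\<^bsub>G2\<^esub> c = \<one>\<^bsub>G2\<^esub>")
      case True
      have e1: "fp_cons G1 G2 (Inr a') ws = ws'" using True Cons Inr by (simp add: fp_cons_simps)
      have e2: "(a \<otimes>\<^bsub>G2\<^esub> a') \<otimes>\<^bsub>G2\<^esub> c = a"
        using assoc True a group.is_monoid[OF G2] by (simp add: monoid.r_one)
      show ?thesis
      proof (cases "a \<otimes>\<^bsub>G2\<^esub> a' = \<one>\<^bsub>G2\<^esub>")
        case True
        then have "a = c" using e2 c group.is_monoid[OF G2] by (simp add: monoid.l_one)
        then show ?thesis using e1 nc True Cons Inr by simp
      next
        case False
        then show ?thesis using e1 nc Cons Inr e2 a by (simp add: fp_cons_simps)
      qed
    next
      case False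
      have e1: "fp_cons G1 G2 (Inr a') ws = Inr (a' \<otimes>\<^bsub>G2\<^esub> c) # ws'" using False Cons Inr by (simp add: fp_cons_simps)
      show ?thesis
      proof (cases "a \<otimes>\<^bsub>G2\<^esub> a' = \<one>\<^bsub>G2\<^esub>")
        case True
        then have "a \<otimes>\<^bsub>G2\<^esub> (a' \<otimes>\<^bsub>G2\<^esub> c) = c" using assoc c group.is_monoid[OF G2] by (simp add: monoid.l_one)
        then show ?thesis using e1 True Cons Inr cne by (simp add: fp_cons_simps)
      next
        case False
        then show ?thesis using e1 assoc Cons Inr by (simp add: fp_cons_simps)
      qed
    qed
  qed
qed

lemma fp_carrier_letters: "ws \<in> carrier (free_product G1 G2) \<Longrightarrow> l \<in> set ws \<Longrightarrow> fp_letter_ok G1 G2 l"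
  by (simp add: free_product_def)

lemma fp_cons_closed:
  assumes "group G1" "group G2" "fp_letter_ok G1 G2 l" "ws \<in> carrier (free_product G1 G2)"
  shows "fp_cons G1 G2 l ws \<in> carrier (free_product G1 G2)"
  using assms fp_cons_Inl_closed fp_cons_Inr_closed
  by (cases l) (auto simp: fp_letter_ok_def)

lemma foldr_fp_closed:
  assumes "group G1" "group G2" "\<forall>l\<in>set u. fp_letter_ok G1 G2 l" "w \<in> carrier (free_product G1 G2)"
  shows "foldr (fp_cons G1 G2) u w \<in> carrier (free_product G1 G2)"
  using assms(3) by (induction u) (simp_all add: assms fp_cons_closed)

lemma foldr_fp_cons:
  assumes G1: "group G1" and G2: "group G2" and l: "fp_letter_ok G1 G2 l"
    and u: "\<forall>x\<in>set u. fp_letter_ok G1 G2 x" and w: "w \<in> carrier (free_product G1 G2)"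
  shows "foldr (fp_cons G1 G2) (fp_cons G1 G2 l u) w = fp_cons G1 G2 l (foldr (fp_cons G1 G2) u w)"
proof (cases u)
  case Nil then show ?thesis by (simp add: fp_cons_simps)
next
  case (Cons l' u')
  have rest: "foldr (fp_cons G1 G2) u' w \<in> carrier (free_product G1 G2)"
    using foldr_fp_closed[OF G1 G2 _ w, of u'] u Cons by simp
  have l': "fp_letter_ok G1 G2 l'" using u Cons by simp
  show ?thesis
  proof (cases l)
    case (Inl a)
    show ?thesis
    proof (cases l')
      case (Inl a')
      then show ?thesis using fp_action_Inl[OF G1 _ _ _ rest, of a a'] \<open>l = Inl a\<close> l l' Cons
        by (auto simp: fp_cons_simps fp_letter_ok_def)
    next
      case (Inr b)
      then show ?thesis using \<open>l = Inl a\<close> Cons by (simp add: fp_cons_simps)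
    qed
  next
    case (Inr a)
    show ?thesis
    proof (cases l')
      case (Inr a')
      then show ?thesis using fp_action_Inr[OF G2 _ _ _ rest, of a a'] \<open>l = Inr a\<close> l l' Cons
        by (auto simp: fp_cons_simps fp_letter_ok_def)
    next
      case (Inl b)
      then show ?thesis using \<open>l = Inr a\<close> Cons by (simp add: fp_cons_simps)
    qed
  qed
qed

lemma foldr_fp_assoc:
  assumes G1: "group G1" and G2: "group G2"
    and u: "\<forall>x\<in>set u. fp_letter_ok G1 G2 x" and v: "v \<in> carrier (free_product G1 G2)"
    and w: "w \<in> carrier (free_product G1 G2)"
  shows "foldr (fp_cons G1 G2) (foldr (fp_cons G1 G2) u v) w = foldr (fp_cons G1 G2) u (foldr (fp_cons G1 G2) v w)"
  using u
proof (induction u)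
  case (Cons a u)
  have "\<forall>x\<in>set (foldr (fp_cons G1 G2) u v). fp_letter_ok G1 G2 x"
    using foldr_fp_closed[OF G1 G2 _ v, of u] Cons.prems fp_carrier_letters by fastforce
  then show ?case using Cons foldr_fp_cons[OF G1 G2 _ _ w, of a "foldr (fp_cons G1 G2) u v"] by simp
qed simp

definition fp_inv_letter :: "'a monoid \<Rightarrow> 'b monoid \<Rightarrow> 'a + 'b \<Rightarrow> 'a + 'b" where
  "fp_inv_letter G1 G2 l = (case l of Inl a \<Rightarrow> Inl (inv\<^bsub>G1\<^esub> a) | Inr b \<Rightarrow> Inr (inv\<^bsub>G2\<^esub> b))"

lemma fp_inv_letter_ok:
  assumes G1: "group G1" and G2: "group G2" and l: "fp_letter_ok G1 G2 l"
  shows "fp_letter_ok G1 G2 (fp_inv_letter G1 G2 l)"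
  using l group.inv_closed[OF G1] group.inv_closed[OF G2] group.inv_eq_1_iff[OF G1] group.inv_eq_1_iff[OF G2]
  by (cases l) (auto simp: fp_letter_ok_def fp_inv_letter_def)

lemma fp_inv_letter_cancel:
  assumes G1: "group G1" and G2: "group G2" and l: "fp_letter_ok G1 G2 l"
  shows "fp_cons G1 G2 (fp_inv_letter G1 G2 l) (l # ws) = ws"
  using l group.l_inv[OF G1] group.l_inv[OF G2]
  by (cases l) (auto simp: fp_letter_ok_def fp_inv_letter_def fp_cons_simps)

lemma fp_left_inv:
  assumes G1: "group G1" and G2: "group G2" and ws: "ws \<in> carrier (free_product G1 G2)"
  shows "foldr (fp_cons G1 G2) (rev (map (fp_inv_letter G1 G2) ws)) ws = []"
  using ws
proof (induction ws)
  case (Cons l ws)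
  have l: "fp_letter_ok G1 G2 l" and ws: "ws \<in> carrier (free_product G1 G2)"
    using Cons.prems by (simp_all add: fp_carrier_Cons)
  have "foldr (fp_cons G1 G2) (rev (map (fp_inv_letter G1 G2) (l # ws))) (l # ws)
      = foldr (fp_cons G1 G2) (rev (map (fp_inv_letter G1 G2) ws)) (fp_cons G1 G2 (fp_inv_letter G1 G2 l) (l # ws))"
    by simp
  also have "\<dots> = foldr (fp_cons G1 G2) (rev (map (fp_inv_letter G1 G2) ws)) ws"
    by (simp only: fp_inv_letter_cancel[OF G1 G2 l])
  also have "\<dots> = []" using Cons.IH ws by simp
  finally show ?case .
qed simp

lemma free_product_is_group:
  assumes G1: "group G1" and G2: "group G2"
  shows "group (free_product G1 G2)"
proof (rule groupI)
  fix x y assume x: "x \<in> carrier (free_product G1 G2)" and y: "y \<in> carrier (free_product G1 G2)"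
  show "x \<otimes>\<^bsub>free_product G1 G2\<^esub> y \<in> carrier (free_product G1 G2)"
    unfolding fp_mult using foldr_fp_closed[OF G1 G2 _ y, of x] x fp_carrier_letters by blast
next
  show "\<one>\<^bsub>free_product G1 G2\<^esub> \<in> carrier (free_product G1 G2)" by (simp add: fp_one fp_carrier_Nil)
next
  fix x assume "x \<in> carrier (free_product G1 G2)"
  show "\<one>\<^bsub>free_product G1 G2\<^esub> \<otimes>\<^bsub>free_product G1 G2\<^esub> x = x" by (simp add: fp_one fp_mult)
next
  fix x y z assume x: "x \<in> carrier (free_product G1 G2)" and y: "y \<in> carrier (free_product G1 G2)"
    and z: "z \<in> carrier (free_product G1 G2)"
  show "x \<otimes>\<^bsub>free_product G1 G2\<^esub> y \<otimes>\<^bsub>free_product G1 G2\<^esub> z = x \<otimes>\<^bsub>free_product G1 G2\<^esub> (y \<otimes>\<^bsub>free_product G1 G2\<^esub> z)"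
    unfolding fp_mult using foldr_fp_assoc[OF G1 G2 _ y z, of x] x fp_carrier_letters by blast
next
  fix x assume x: "x \<in> carrier (free_product G1 G2)"
  define iw where "iw = rev (map (fp_inv_letter G1 G2) x)"
  have iwok: "\<forall>l\<in>set iw. fp_letter_ok G1 G2 l"
    unfolding iw_def using fp_inv_letter_ok[OF G1 G2] fp_carrier_letters[OF x] by auto
  define y where "y = foldr (fp_cons G1 G2) iw []"
  have yc: "y \<in> carrier (free_product G1 G2)"
    unfolding y_def using foldr_fp_closed[OF G1 G2 iwok fp_carrier_Nil] .
  have "foldr (fp_cons G1 G2) y x = []"
    unfolding y_def foldr_fp_assoc[OF G1 G2 iwok fp_carrier_Nil x] using fp_left_inv[OF G1 G2 x]
    by (simp add: iw_def)
  then show "\<exists>y\<in>carrier (free_product G1 G2). y \<otimes>\<^bsub>free_product G1 G2\<^esub> x = \<one>\<^bsub>free_product G1 G2\<^esub>"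
    using yc by (auto simp: fp_mult fp_one)
qed




definition indiscrete :: "'a set \<Rightarrow> 'a topology" where
  "indiscrete A = topology (\<lambda>U. U = {} \<or> U = A)"

lemma istopology_indiscrete: "istopology (\<lambda>U. U = {} \<or> U = A)"
  unfolding istopology_def
proof (intro conjI allI impI)
  fix K :: "'a set set" assume "\<forall>U\<in>K. U = {} \<or> U = A"
  then have "\<Union>K = {} \<or> \<Union>K = A" by (cases "A \<in> K") auto
  then show "\<Union>K = {} \<or> \<Union>K = A" .
qed auto

lemma openin_indiscrete: "openin (indiscrete A) U \<longleftrightarrow> U = {} \<or> U = A"
  unfolding indiscrete_def topology_inverse'[OF istopology_indiscrete] by simp

lemma topspace_indiscrete [simp]: "topspace (indiscrete A) = A"
  unfolding topspace_def openin_indiscrete by auto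

lemma continuous_map_indiscrete:
  "continuous_map X (indiscrete A) f \<longleftrightarrow> f \<in> topspace X \<rightarrow> A"
proof
  assume "f \<in> topspace X \<rightarrow> A"
  moreover have "openin X {x \<in> topspace X. f x \<in> U}" if "U = {} \<or> U = A" for U
    using that \<open>f \<in> topspace X \<rightarrow> A\<close> by (auto simp: Pi_iff intro: back_subst[of "openin X", OF openin_topspace])
  ultimately show "continuous_map X (indiscrete A) f"
    unfolding continuous_map_def openin_indiscrete by auto
qed (simp add: continuous_map_def)

lemma group_topology_indiscrete:
  assumes "group G"
  shows "group_topology G (indiscrete (carrier G))"
  unfolding group_topology_def continuous_map_indiscrete
  using group.inv_closed[OF assms] monoid.m_closed[OF group.is_monoid[OF assms]]
  by auto

definition tjoin :: "'a topology set \<Rightarrow> 'a topology" where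
  "tjoin \<T> = topology_generated_by (\<Union>T\<in>\<T>. {U. openin T U})"

lemma topspace_tjoin:
  assumes "\<T> \<noteq> {}" "\<forall>T\<in>\<T>. topspace T = A"
  shows "topspace (tjoin \<T>) = A"
proof -
  have "\<Union>(\<Union>T\<in>\<T>. {U. openin T U}) = (\<Union>T\<in>\<T>. topspace T)"
    by (auto simp: topspace_def)
  also have "\<dots> = A" using assms by auto
  finally show ?thesis unfolding tjoin_def topology_generated_by_topspace .
qed

lemma openin_tjoin: "T \<in> \<T> \<Longrightarrow> openin T U \<Longrightarrow> openin (tjoin \<T>) U"
  unfolding tjoin_def openin_topology_generated_by_iff
  by (rule generate_topology_on.Basis) blast

lemma continuous_map_tjoin:
  assumes ne: "\<T> \<noteq> {}" and top: "\<forall>T\<in>\<T>. topspace T = A"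
    and c: "\<forall>T\<in>\<T>. continuous_map X T f"
  shows "continuous_map X (tjoin \<T>) f"
  unfolding continuous_map_def
proof (intro conjI allI impI)
  obtain T0 where T0: "T0 \<in> \<T>" using ne by blast
  show "f \<in> topspace X \<rightarrow> topspace (tjoin \<T>)"
    using c T0 top topspace_tjoin[OF ne top] by (auto simp: continuous_map_def)
next
  fix U assume "openin (tjoin \<T>) U"
  then have "generate_topology_on (\<Union>T\<in>\<T>. {U. openin T U}) U"
    unfolding tjoin_def openin_topology_generated_by_iff .
  then show "openin X {x \<in> topspace X. f x \<in> U}"
  proof (induction rule: generate_topology_on.induct)
    case Empty then show ?case by simp
  next
    case (Int a b)
    have "{x \<in> topspace X. f x \<in> a \<inter> b} = {x \<in> topspace X. f x \<in> a} \<inter> {x \<in> topspace X. f x \<in> b}"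
      by auto
    then show ?case using Int.IH by (simp add: openin_Int)
  next
    case (UN K)
    have "{x \<in> topspace X. f x \<in> \<Union>K} = (\<Union>k\<in>K. {x \<in> topspace X. f x \<in> k})" by auto
    then show ?case using UN.IH by (auto intro: openin_Union)
  next
    case (Basis s)
    then obtain T where "T \<in> \<T>" "openin T s" by blast
    then show ?case using c by (simp add: continuous_map_def)
  qed
qed

lemma continuous_map_finer:
  assumes "topspace X = topspace Y" "\<And>U. openin Y U \<Longrightarrow> openin X U"
  shows "continuous_map X Y (\<lambda>x. x)"
  unfolding continuous_map_def
proof (intro conjI allI impI)
  fix U assume "openin Y U"
  then have "{x \<in> topspace X. x \<in> U} = U" using assms(1) openin_subset by blast
  then show "openin X {x \<in> topspace X. x \<in> U}" using assms(2) \<open>openin Y U\<close> by simp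
qed (use assms in auto)

lemma group_topology_tjoin:
  assumes ne: "\<T> \<noteq> {}" and gt: "\<forall>T\<in>\<T>. group_topology G T"
  shows "group_topology G (tjoin \<T>)"
proof -
  have top: "\<forall>T\<in>\<T>. topspace T = carrier G" using gt by (simp add: group_topology_def)
  define J where "J = tjoin \<T>"
  have tJ: "topspace J = carrier G" unfolding J_def by (rule topspace_tjoin[OF ne top])
  have fin: "continuous_map J T (\<lambda>x. x)" if "T \<in> \<T>" for T
    by (rule continuous_map_finer) (use tJ top that openin_tjoin in \<open>auto simp: J_def\<close>)
  have "continuous_map (prod_topology J J) T (\<lambda>(x, y). x \<otimes>\<^bsub>G\<^esub> y)" if "T \<in> \<T>" for T
  proof -
    have "continuous_map (prod_topology J J) (prod_topology T T) (\<lambda>(x, y). ((\<lambda>x. x) x, (\<lambda>x. x) y))"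
      unfolding continuous_map_prod_top using fin[OF that] by simp
    moreover have "continuous_map (prod_topology T T) T (\<lambda>(x, y). x \<otimes>\<^bsub>G\<^esub> y)"
      using gt that by (simp add: group_topology_def)
    ultimately have "continuous_map (prod_topology J J) T ((\<lambda>(x, y). x \<otimes>\<^bsub>G\<^esub> y) \<circ> (\<lambda>(x, y). ((\<lambda>x. x) x, (\<lambda>x. x) y)))"
      by (rule continuous_map_compose)
    moreover have "(\<lambda>(x, y). x \<otimes>\<^bsub>G\<^esub> y) \<circ> (\<lambda>(x, y). ((\<lambda>x. x) x, (\<lambda>x. x) y)) = (\<lambda>(x, y). x \<otimes>\<^bsub>G\<^esub> y)"
      by (auto simp: fun_eq_iff)
    ultimately show ?thesis by simp
  qed
  then have m: "continuous_map (prod_topology J J) J (\<lambda>(x, y). x \<otimes>\<^bsub>G\<^esub> y)"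
    unfolding J_def by (intro continuous_map_tjoin[OF ne top]) (simp add: J_def)
  have "continuous_map J T (\<lambda>x. inv\<^bsub>G\<^esub> x)" if "T \<in> \<T>" for T
  proof -
    have "continuous_map T T (\<lambda>x. inv\<^bsub>G\<^esub> x)" using gt that by (simp add: group_topology_def)
    with fin[OF that] have "continuous_map J T ((\<lambda>x. inv\<^bsub>G\<^esub> x) \<circ> (\<lambda>x. x))"
      by (rule continuous_map_compose)
    then show ?thesis by (simp add: o_def)
  qed
  then have i: "continuous_map J J (\<lambda>x. inv\<^bsub>G\<^esub> x)"
    unfolding J_def by (intro continuous_map_tjoin[OF ne top]) (simp add: J_def)
  show ?thesis using tJ m i unfolding J_def group_topology_def by simp
qed

lemma finest_group_topology_props:
  fixes G :: "'a monoid"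
  assumes gt0: "group_topology G T0" and P0: "P T0"
    and Pj: "P (tjoin {T. group_topology G T \<and> P T})"
  shows "group_topology G (finest_group_topology G P) \<and> P (finest_group_topology G P) \<and>
     (\<forall>T'. group_topology G T' \<and> P T' \<longrightarrow> (\<forall>U. openin T' U \<longrightarrow> openin (finest_group_topology G P) U))"
proof -
  define \<T> where "\<T> = {T. group_topology G T \<and> P T}"
  have ne: "\<T> \<noteq> {}" using gt0 P0 by (auto simp: \<T>_def)
  have gJ: "group_topology G (tjoin \<T>)" by (rule group_topology_tjoin[OF ne]) (simp add: \<T>_def)
  have PJ: "P (tjoin \<T>)" using Pj by (simp add: \<T>_def)
  have fJ: "\<forall>T'. group_topology G T' \<and> P T' \<longrightarrow> (\<forall>U. openin T' U \<longrightarrow> openin (tjoin \<T>) U)"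
    using openin_tjoin[of _ \<T>] by (auto simp: \<T>_def)
  have "finest_group_topology G P = tjoin \<T>"
    unfolding finest_group_topology_def
  proof (rule the_equality)
    show "group_topology G (tjoin \<T>) \<and> P (tjoin \<T>) \<and>
      (\<forall>T'. group_topology G T' \<and> P T' \<longrightarrow> (\<forall>U. openin T' U \<longrightarrow> openin (tjoin \<T>) U))"
      using gJ PJ fJ by blast
  next
    fix T assume T: "group_topology G T \<and> P T \<and>
      (\<forall>T'. group_topology G T' \<and> P T' \<longrightarrow> (\<forall>U. openin T' U \<longrightarrow> openin T U))"
    show "T = tjoin \<T>"
      unfolding topology_eq using T gJ PJ fJ by blast
  qed
  then show ?thesis using gJ PJ fJ by simp
qed




lemma group_topology_pullback:
  assumes G: "group G" and H: "group H" and h: "h \<in> hom G H" and TH: "group_topology H TH"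
  shows "group_topology G (pullback_topology (carrier G) h TH)"
proof -
  interpret gh: group_hom G H h using G H h by (simp add: group_hom_def group_hom_axioms_def)
  define PB where "PB = pullback_topology (carrier G) h TH"
  have tTH: "topspace TH = carrier H" using TH by (simp add: group_topology_def)
  have tPB: "topspace PB = carrier G"
    unfolding PB_def topspace_pullback_topology tTH using gh.hom_closed by auto
  have hc: "continuous_map PB TH h"
    using continuous_map_pullback[OF continuous_map_id, of "carrier G" h TH] by (simp add: PB_def)
  have "continuous_map (prod_topology PB PB) (prod_topology TH TH) (\<lambda>(x, y). (h x, h y))"
    unfolding continuous_map_prod_top using hc by simp
  then have "continuous_map (prod_topology PB PB) TH ((\<lambda>(x, y). x \<otimes>\<^bsub>H\<^esub> y) \<circ> (\<lambda>(x, y). (h x, h y)))"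
    using TH by (intro continuous_map_compose) (auto simp: group_topology_def)
  then have "continuous_map (prod_topology PB PB) TH (h \<circ> (\<lambda>(x, y). x \<otimes>\<^bsub>G\<^esub> y))"
    by (rule continuous_map_eq) (auto simp: tPB)
  then have m: "continuous_map (prod_topology PB PB) PB (\<lambda>(x, y). x \<otimes>\<^bsub>G\<^esub> y)"
    unfolding PB_def by (rule continuous_map_pullback') (auto simp: tPB[unfolded PB_def])
  have "continuous_map PB TH ((\<lambda>x. inv\<^bsub>H\<^esub> x) \<circ> h)"
    using TH hc by (intro continuous_map_compose) (auto simp: group_topology_def)
  then have "continuous_map PB TH (h \<circ> (\<lambda>x. inv\<^bsub>G\<^esub> x))"
    by (rule continuous_map_eq) (auto simp: tPB)
  then have i: "continuous_map PB PB (\<lambda>x. inv\<^bsub>G\<^esub> x)"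
    unfolding PB_def by (rule continuous_map_pullback') (auto simp: tPB[unfolded PB_def])
  show ?thesis using tPB m i unfolding group_topology_def PB_def by simp
qed

lemma continuous_map_from_finer_pullback:
  assumes X: "topspace X = carrier G" and h: "h \<in> carrier G \<rightarrow> topspace TH"
    and fin: "\<And>U. openin (pullback_topology (carrier G) h TH) U \<Longrightarrow> openin X U"
  shows "continuous_map X TH h"
  unfolding continuous_map_def
proof (intro conjI allI impI)
  show "h \<in> topspace X \<rightarrow> topspace TH" using X h by simp
next
  fix V assume "openin TH V"
  then have "openin (pullback_topology (carrier G) h TH) (h -` V \<inter> carrier G)"
    unfolding openin_pullback_topology by blast
  moreover have "{x \<in> topspace X. h x \<in> V} = h -` V \<inter> carrier G" using X by auto
  ultimately show "openin X {x \<in> topspace X. h x \<in> V}" using fin by simp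
qed

lemma istopology_quotient: "istopology (\<lambda>U. U \<subseteq> Y \<and> openin X {x \<in> topspace X. f x \<in> U})"
proof (simp only: istopology_def, intro conjI allI impI)
  fix S T assume S: "S \<subseteq> Y \<and> openin X {x \<in> topspace X. f x \<in> S}" and T: "T \<subseteq> Y \<and> openin X {x \<in> topspace X. f x \<in> T}"
  then show "S \<inter> T \<subseteq> Y" by blast
  have "{x \<in> topspace X. f x \<in> S \<inter> T} = {x \<in> topspace X. f x \<in> S} \<inter> {x \<in> topspace X. f x \<in> T}" by auto
  then show "openin X {x \<in> topspace X. f x \<in> S \<inter> T}" using S T by (simp add: openin_Int)
next
  fix K assume K: "\<forall>S\<in>K. S \<subseteq> Y \<and> openin X {x \<in> topspace X. f x \<in> S}"
  then show "\<Union>K \<subseteq> Y" by blast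
  have "{x \<in> topspace X. f x \<in> \<Union>K} = (\<Union>S\<in>K. {x \<in> topspace X. f x \<in> S})" by auto
  then show "openin X {x \<in> topspace X. f x \<in> \<Union>K}" using K by (auto intro: openin_Union)
qed

lemma openin_quotient_topology:
  "openin (quotient_topology X f Y) U \<longleftrightarrow> U \<subseteq> Y \<and> openin X {x \<in> topspace X. f x \<in> U}"
  unfolding quotient_topology_def topology_inverse'[OF istopology_quotient] by simp

lemma topspace_quotient_topology:
  assumes "f \<in> topspace X \<rightarrow> Y"
  shows "topspace (quotient_topology X f Y) = Y"
proof -
  have "openin (quotient_topology X f Y) Y"
    unfolding openin_quotient_topology using assms by (auto intro: back_subst[of "openin X", OF openin_topspace])
  then have "Y \<subseteq> topspace (quotient_topology X f Y)" by (rule openin_subset)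
  moreover have "topspace (quotient_topology X f Y) \<subseteq> Y"
    unfolding topspace_def openin_quotient_topology by auto
  ultimately show ?thesis by blast
qed

lemma right_translation_continuous:
  assumes gt: "group_topology G X" and c: "c \<in> carrier G"
  shows "continuous_map X X (\<lambda>x. x \<otimes>\<^bsub>G\<^esub> c)"
proof -
  have tX: "topspace X = carrier G" using gt by (simp add: group_topology_def)
  have "continuous_map X (prod_topology X X) (\<lambda>x. (x, c))"
    by (intro continuous_map_pairedI continuous_map_id[unfolded id_def]) (simp add: tX c)
  then have "continuous_map X X ((\<lambda>(x, y). x \<otimes>\<^bsub>G\<^esub> y) \<circ> (\<lambda>x. (x, c)))"
    using gt by (intro continuous_map_compose) (auto simp: group_topology_def)
  then show ?thesis by (simp add: o_def)
qed

lemma quotient_group_topology: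
  assumes G: "group G" and H: "group H" and k: "k \<in> hom G H" and surj: "k ` carrier G = carrier H"
    and gt: "group_topology G X"
  shows "group_topology H (quotient_topology X k (carrier H)) \<and> open_map X (quotient_topology X k (carrier H)) k"
proof -
  interpret gh: group_hom G H k using G H k by (simp add: group_hom_def group_hom_axioms_def)
  define Q where "Q = quotient_topology X k (carrier H)"
  have tX: "topspace X = carrier G" using gt by (simp add: group_topology_def)
  have tQ: "topspace Q = carrier H" unfolding Q_def
    by (rule topspace_quotient_topology) (use tX gh.hom_closed in auto)
  have oQ: "openin Q U \<longleftrightarrow> U \<subseteq> carrier H \<and> openin X {x \<in> carrier G. k x \<in> U}" for U
    unfolding Q_def openin_quotient_topology tX ..
  have om: "open_map X Q k"
    unfolding open_map_def
  proof (intro allI impI)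
    fix V assume V: "openin X V"
    then have VG: "V \<subseteq> carrier G" using openin_subset tX by blast
    define N where "N = {n \<in> carrier G. k n = \<one>\<^bsub>H\<^esub>}"
    have eq: "{x \<in> carrier G. k x \<in> k ` V} = (\<Union>n\<in>N. {x \<in> topspace X. x \<otimes>\<^bsub>G\<^esub> inv\<^bsub>G\<^esub> n \<in> V})"
    proof (intro equalityI subsetI)
      fix x assume "x \<in> {x \<in> carrier G. k x \<in> k ` V}"
      then obtain v where x: "x \<in> carrier G" and v: "v \<in> V" and kv: "k x = k v" by auto
      have vG: "v \<in> carrier G" using v VG by blast
      define n where "n = inv\<^bsub>G\<^esub> v \<otimes>\<^bsub>G\<^esub> x"
      have nG: "n \<in> carrier G" unfolding n_def using x vG by simp
      have "k n = \<one>\<^bsub>H\<^esub>" unfolding n_def using x vG kv by simp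
      then have "n \<in> N" using nG by (simp add: N_def)
      moreover have "x \<otimes>\<^bsub>G\<^esub> inv\<^bsub>G\<^esub> n = v"
        unfolding n_def using x vG by (simp add: gh.G.inv_mult_group gh.G.m_assoc[symmetric])
      ultimately show "x \<in> (\<Union>n\<in>N. {x \<in> topspace X. x \<otimes>\<^bsub>G\<^esub> inv\<^bsub>G\<^esub> n \<in> V})"
        using v x tX by auto
    next
      fix x assume "x \<in> (\<Union>n\<in>N. {x \<in> topspace X. x \<otimes>\<^bsub>G\<^esub> inv\<^bsub>G\<^esub> n \<in> V})"
      then obtain n where n: "n \<in> carrier G" "k n = \<one>\<^bsub>H\<^esub>" and x: "x \<in> carrier G"
        and xv: "x \<otimes>\<^bsub>G\<^esub> inv\<^bsub>G\<^esub> n \<in> V"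
        using tX by (auto simp: N_def)
      have "k (x \<otimes>\<^bsub>G\<^esub> inv\<^bsub>G\<^esub> n) = k x" using n x by simp
      then show "x \<in> {x \<in> carrier G. k x \<in> k ` V}" using x xv by (auto intro: image_eqI[of _ _ "x \<otimes>\<^bsub>G\<^esub> inv\<^bsub>G\<^esub> n"])
    qed
    have "openin X {x \<in> topspace X. x \<otimes>\<^bsub>G\<^esub> inv\<^bsub>G\<^esub> n \<in> V}" if "n \<in> N" for n
      using right_translation_continuous[OF gt, of "inv\<^bsub>G\<^esub> n"] that V
      by (auto simp: N_def continuous_map_def)
    then have "openin X {x \<in> carrier G. k x \<in> k ` V}" unfolding eq by auto
    moreover have "k ` V \<subseteq> carrier H" using VG gh.hom_closed by auto
    ultimately show "openin Q (k ` V)" using oQ by simp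
  qed
  have m: "continuous_map (prod_topology Q Q) Q (\<lambda>(x, y). x \<otimes>\<^bsub>H\<^esub> y)"
    unfolding continuous_map_def
  proof (intro conjI allI impI)
    show "(\<lambda>(x, y). x \<otimes>\<^bsub>H\<^esub> y) \<in> topspace (prod_topology Q Q) \<rightarrow> topspace Q"
      using tQ by auto
  next
    fix U assume U: "openin Q U"
    then have UH: "U \<subseteq> carrier H" and Uo: "openin X {x \<in> carrier G. k x \<in> U}" using oQ by auto
    define M where "M = {p \<in> topspace (prod_topology X X). (\<lambda>(x, y). x \<otimes>\<^bsub>G\<^esub> y) p \<in> {x \<in> carrier G. k x \<in> U}}"
    have Mo: "openin (prod_topology X X) M"
      unfolding M_def using gt Uo by (auto simp: group_topology_def continuous_map_def)
    show "openin (prod_topology Q Q) {p \<in> topspace (prod_topology Q Q). (\<lambda>(x, y). x \<otimes>\<^bsub>H\<^esub> y) p \<in> U}"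
      unfolding openin_prod_topology_alt
    proof (intro allI impI)
      fix a b assume ab: "(a, b) \<in> {p \<in> topspace (prod_topology Q Q). (\<lambda>(x, y). x \<otimes>\<^bsub>H\<^esub> y) p \<in> U}"
      then have a: "a \<in> carrier H" and b: "b \<in> carrier H" and abU: "a \<otimes>\<^bsub>H\<^esub> b \<in> U" using tQ by auto
      have "a \<in> k ` carrier G" using a surj by simp
      then obtain x where x1: "a = k x" and x2: "x \<in> carrier G" by (rule imageE)
      have x: "x \<in> carrier G" "k x = a" using x1 x2 by simp_all
      have "b \<in> k ` carrier G" using b surj by simp
      then obtain y where y1: "b = k y" and y2: "y \<in> carrier G" by (rule imageE)
      have y: "y \<in> carrier G" "k y = b" using y1 y2 by simp_all
      have "k (x \<otimes>\<^bsub>G\<^esub> y) = a \<otimes>\<^bsub>H\<^esub> b" using x y by simp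
      then have "(x, y) \<in> M" unfolding M_def using x(1) y(1) tX abU by simp
      then obtain V V' where VV: "openin X V" "openin X V'" "x \<in> V" "y \<in> V'" "V \<times> V' \<subseteq> M"
        using Mo unfolding openin_prod_topology_alt by (elim allE[of _ x] allE[of _ y] impE) auto
      have VG: "V \<subseteq> carrier G" "V' \<subseteq> carrier G" using VV openin_subset tX by blast+
      show "\<exists>A B. openin Q A \<and> openin Q B \<and> a \<in> A \<and> b \<in> B \<and>
          A \<times> B \<subseteq> {p \<in> topspace (prod_topology Q Q). (\<lambda>(x, y). x \<otimes>\<^bsub>H\<^esub> y) p \<in> U}"
      proof (intro exI conjI)
        show "openin Q (k ` V)" "openin Q (k ` V')" using om VV by (auto simp: open_map_def)
        show "a \<in> k ` V" "b \<in> k ` V'" using x y VV by auto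
        show "k ` V \<times> k ` V' \<subseteq> {p \<in> topspace (prod_topology Q Q). (\<lambda>(x, y). x \<otimes>\<^bsub>H\<^esub> y) p \<in> U}"
        proof clarsimp
          fix v v' assume v: "v \<in> V" "v' \<in> V'"
          then have "(v, v') \<in> M" using VV by blast
          then have "k (v \<otimes>\<^bsub>G\<^esub> v') \<in> U" by (simp add: M_def)
          moreover have "v \<in> carrier G" "v' \<in> carrier G" using v VG by blast+
          ultimately show "k v \<in> topspace Q \<and> k v' \<in> topspace Q \<and> k v \<otimes>\<^bsub>H\<^esub> k v' \<in> U"
            using tQ by simp
        qed
      qed
    qed
  qed
  have i: "continuous_map Q Q (\<lambda>x. inv\<^bsub>H\<^esub> x)"
    unfolding continuous_map_def
  proof (intro conjI allI impI)
    show "(\<lambda>x. inv\<^bsub>H\<^esub> x) \<in> topspace Q \<rightarrow> topspace Q" using tQ by auto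
  next
    fix U assume U: "openin Q U"
    then have UH: "U \<subseteq> carrier H" and Uo: "openin X {x \<in> carrier G. k x \<in> U}" using oQ by auto
    have "openin X {x \<in> topspace X. inv\<^bsub>G\<^esub> x \<in> {x \<in> carrier G. k x \<in> U}}"
      using gt Uo by (auto simp: group_topology_def continuous_map_def)
    moreover have "{x \<in> topspace X. inv\<^bsub>G\<^esub> x \<in> {x \<in> carrier G. k x \<in> U}} = {x \<in> carrier G. k x \<in> {x \<in> topspace Q. inv\<^bsub>H\<^esub> x \<in> U}}"
      using tX tQ by auto
    ultimately show "openin Q {x \<in> topspace Q. inv\<^bsub>H\<^esub> x \<in> U}" using oQ tQ by auto
  qed
  show ?thesis using tQ m i om unfolding group_topology_def Q_def by simp
qed




definition fg_letter :: "'b monoid \<Rightarrow> ('a \<Rightarrow> 'b) \<Rightarrow> 'a \<times> bool \<Rightarrow> 'b" where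
  "fg_letter H f l = (if snd l then f (fst l) else inv\<^bsub>H\<^esub> (f (fst l)))"

lemma free_ext_Nil: "free_ext H f [] = \<one>\<^bsub>H\<^esub>"
  by (simp add: free_ext_def)

lemma free_ext_Cons: "free_ext H f (l # w) = fg_letter H f l \<otimes>\<^bsub>H\<^esub> free_ext H f w"
  by (cases l) (simp add: free_ext_def fg_letter_def)

lemma fg_letter_closed: "group H \<Longrightarrow> f (fst l) \<in> carrier H \<Longrightarrow> fg_letter H f l \<in> carrier H"
  by (simp add: fg_letter_def group.inv_closed)

lemma free_ext_closed:
  assumes H: "group H" and f: "\<forall>l\<in>set w. f (fst l) \<in> carrier H"
  shows "free_ext H f w \<in> carrier H"
  using f
proof (induction w)
  case Nil then show ?case using H by (simp add: free_ext_Nil group.is_monoid monoid.one_closed)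
next
  case (Cons l w)
  then show ?case using H fg_letter_closed[OF H, where f=f and l=l]
    by (simp add: free_ext_Cons monoid.m_closed group.is_monoid)
qed

lemma free_ext_fg_cons:
  assumes H: "group H" and f: "\<forall>l\<in>set (a # w). f (fst l) \<in> carrier H"
  shows "free_ext H f (fg_cons a w) = fg_letter H f a \<otimes>\<^bsub>H\<^esub> free_ext H f w"
proof (cases w)
  case Nil then show ?thesis by (simp add: fg_cons_def free_ext_Cons)
next
  case (Cons a' w')
  show ?thesis
  proof (cases "fst a = fst a' \<and> snd a \<noteq> snd a'")
    case True
    then have c: "fg_cons a w = w'" using Cons by (simp add: fg_cons_def)
    have fa: "f (fst a) \<in> carrier H" using f by simp
    have rest: "free_ext H f w' \<in> carrier H" using free_ext_closed[OF H, of w' f] f Cons by simp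
    have inv: "fg_letter H f a \<otimes>\<^bsub>H\<^esub> fg_letter H f a' = \<one>\<^bsub>H\<^esub>"
      using True fa H by (cases "snd a") (auto simp: fg_letter_def group.r_inv group.l_inv)
    have "fg_letter H f a \<otimes>\<^bsub>H\<^esub> free_ext H f w = (fg_letter H f a \<otimes>\<^bsub>H\<^esub> fg_letter H f a') \<otimes>\<^bsub>H\<^esub> free_ext H f w'"
      using Cons H fa rest fg_letter_closed[OF H, where f=f and l=a] fg_letter_closed[OF H, where f=f and l=a'] True
      by (simp add: free_ext_Cons monoid.m_assoc group.is_monoid)
    also have "\<dots> = free_ext H f w'" using inv rest H by (simp add: monoid.l_one group.is_monoid)
    finally show ?thesis using c by simp
  next
    case False
    then have "fg_cons a w = a # w" using Cons by (simp add: fg_cons_def)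
    then show ?thesis by (simp add: free_ext_Cons)
  qed
qed

lemma free_ext_foldr:
  assumes H: "group H" and fu: "\<forall>l\<in>set u. f (fst l) \<in> carrier H" and fv: "\<forall>l\<in>set v. f (fst l) \<in> carrier H"
  shows "free_ext H f (foldr fg_cons u v) = free_ext H f u \<otimes>\<^bsub>H\<^esub> free_ext H f v"
  using fu
proof (induction u)
  case Nil then show ?case using H free_ext_closed[OF H fv] by (simp add: free_ext_Nil group.is_monoid monoid.l_one)
next
  case (Cons a u)
  have fa: "f (fst a) \<in> carrier H" and fu': "\<forall>l\<in>set u. f (fst l) \<in> carrier H" using Cons.prems by auto
  have fr: "\<forall>l\<in>set (foldr fg_cons u v). f (fst l) \<in> carrier H"
  proof -
    have "fst ` set (foldr fg_cons u v) \<subseteq> {x. f x \<in> carrier H}"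
      by (rule foldr_fg_letters) (use fu' fv in auto)
    then show ?thesis by auto
  qed
  have "free_ext H f (foldr fg_cons (a # u) v) = fg_letter H f a \<otimes>\<^bsub>H\<^esub> free_ext H f (foldr fg_cons u v)"
    using free_ext_fg_cons[OF H, where f=f and a=a and w="foldr fg_cons u v"] fa fr by simp
  also have "\<dots> = fg_letter H f a \<otimes>\<^bsub>H\<^esub> (free_ext H f u \<otimes>\<^bsub>H\<^esub> free_ext H f v)"
    using Cons.IH[OF fu'] by simp
  also have "\<dots> = free_ext H f (a # u) \<otimes>\<^bsub>H\<^esub> free_ext H f v"
    using H fg_letter_closed[OF H, where f=f and l=a] fa free_ext_closed[OF H fu'] free_ext_closed[OF H fv]
    by (simp add: free_ext_Cons monoid.m_assoc group.is_monoid)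
  finally show ?case .
qed

lemma free_ext_hom:
  assumes H: "group H" and f: "f \<in> A \<rightarrow> carrier H"
  shows "free_ext H f \<in> hom (free_group A) H"
proof (rule homI)
  fix x assume "x \<in> carrier (free_group A)"
  then have "\<forall>l\<in>set x. f (fst l) \<in> carrier H" using f by (auto simp: fg_carrier)
  then show "free_ext H f x \<in> carrier H" by (rule free_ext_closed[OF H])
next
  fix x y assume x: "x \<in> carrier (free_group A)" and y: "y \<in> carrier (free_group A)"
  have "\<forall>l\<in>set x. f (fst l) \<in> carrier H" "\<forall>l\<in>set y. f (fst l) \<in> carrier H"
    using x y f by (auto simp: fg_carrier)
  then show "free_ext H f (x \<otimes>\<^bsub>free_group A\<^esub> y) = free_ext H f x \<otimes>\<^bsub>H\<^esub> free_ext H f y"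
    unfolding fg_mult by (rule free_ext_foldr[OF H])
qed

lemma free_ext_gen: "group H \<Longrightarrow> f x \<in> carrier H \<Longrightarrow> free_ext H f (fg_gen x) = f x"
  by (simp add: fg_gen_def free_ext_Cons free_ext_Nil fg_letter_def group.is_monoid monoid.r_one)

lemma fg_gen_closed: "x \<in> A \<Longrightarrow> fg_gen x \<in> carrier (free_group A)"
  by (simp add: fg_gen_def fg_carrier)

lemma free_ext_hom_comp:
  assumes H: "group H" and K: "group K" and h: "h \<in> hom H K" and f: "\<forall>l\<in>set w. f (fst l) \<in> carrier H"
  shows "h (free_ext H f w) = free_ext K (h \<circ> f) w"
  using f
proof (induction w)
  case Nil then show ?case using H K h by (simp add: free_ext_Nil hom_one)
next
  case (Cons a w)
  interpret gh: group_hom H K h using H K h by (simp add: group_hom_def group_hom_axioms_def)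
  have fa: "f (fst a) \<in> carrier H" and fw: "\<forall>l\<in>set w. f (fst l) \<in> carrier H" using Cons.prems by auto
  have "h (fg_letter H f a) = fg_letter K (h \<circ> f) a" using fa by (simp add: fg_letter_def)
  then show ?case using Cons.IH[OF fw] fa free_ext_closed[OF H fw] fg_letter_closed[OF H, where f=f and l=a]
    by (simp add: free_ext_Cons o_def)
qed

lemma free_ext_cong:
  assumes "\<forall>l\<in>set w. f (fst l) = g (fst l)"
  shows "free_ext H f w = free_ext H g w"
  using assms by (induction w) (simp_all add: free_ext_Cons free_ext_Nil fg_letter_def)

lemma istopology_du:
  "istopology (\<lambda>U. U \<subseteq> Inl ` topspace T1 \<union> Inr ` topspace T2 \<and> openin T1 (Inl -` U) \<and> openin T2 (Inr -` U))"
proof (simp only: istopology_def, intro conjI allI impI)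
  fix S T assume S: "S \<subseteq> Inl ` topspace T1 \<union> Inr ` topspace T2 \<and> openin T1 (Inl -` S) \<and> openin T2 (Inr -` S)"
    and T: "T \<subseteq> Inl ` topspace T1 \<union> Inr ` topspace T2 \<and> openin T1 (Inl -` T) \<and> openin T2 (Inr -` T)"
  then show "S \<inter> T \<subseteq> Inl ` topspace T1 \<union> Inr ` topspace T2" by blast
  show "openin T1 (Inl -` (S \<inter> T))" using S T by (simp add: vimage_Int openin_Int)
  show "openin T2 (Inr -` (S \<inter> T))" using S T by (simp add: vimage_Int openin_Int)
next
  fix K assume K: "\<forall>S\<in>K. S \<subseteq> Inl ` topspace T1 \<union> Inr ` topspace T2 \<and> openin T1 (Inl -` S) \<and> openin T2 (Inr -` S)"
  then show "\<Union>K \<subseteq> Inl ` topspace T1 \<union> Inr ` topspace T2" by blast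
  show "openin T1 (Inl -` \<Union>K)" using K by (auto simp: vimage_Union intro: openin_Union)
  show "openin T2 (Inr -` \<Union>K)" using K by (auto simp: vimage_Union intro: openin_Union)
qed

lemma openin_du:
  "openin (disjoint_union_topology T1 T2) U \<longleftrightarrow>
     U \<subseteq> Inl ` topspace T1 \<union> Inr ` topspace T2 \<and> openin T1 (Inl -` U) \<and> openin T2 (Inr -` U)"
  unfolding disjoint_union_topology_def topology_inverse'[OF istopology_du] by simp

lemma topspace_du: "topspace (disjoint_union_topology T1 T2) = Inl ` topspace T1 \<union> Inr ` topspace T2"
proof -
  have "openin (disjoint_union_topology T1 T2) (Inl ` topspace T1 \<union> Inr ` topspace T2)"
  proof -
    have "Inl -` (Inl ` topspace T1 \<union> Inr ` topspace T2) = topspace T1" by auto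
    moreover have "Inr -` (Inl ` topspace T1 \<union> Inr ` topspace T2) = topspace T2" by auto
    ultimately show ?thesis unfolding openin_du by simp
  qed
  then have "Inl ` topspace T1 \<union> Inr ` topspace T2 \<subseteq> topspace (disjoint_union_topology T1 T2)"
    by (rule openin_subset)
  moreover have "topspace (disjoint_union_topology T1 T2) \<subseteq> Inl ` topspace T1 \<union> Inr ` topspace T2"
    unfolding topspace_def openin_du by auto
  ultimately show ?thesis by blast
qed

lemma continuous_map_Inl_du: "continuous_map T1 (disjoint_union_topology T1 T2) Inl"
  unfolding continuous_map_def
proof (intro conjI allI impI)
  fix U assume "openin (disjoint_union_topology T1 T2) U"
  then have "openin T1 (Inl -` U)" by (simp add: openin_du)
  moreover have "{x \<in> topspace T1. Inl x \<in> U} = Inl -` U"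
    using openin_subset[OF \<open>openin T1 (Inl -` U)\<close>] by auto
  ultimately show "openin T1 {x \<in> topspace T1. Inl x \<in> U}" by simp
qed (auto simp: topspace_du)

lemma continuous_map_Inr_du: "continuous_map T2 (disjoint_union_topology T1 T2) Inr"
  unfolding continuous_map_def
proof (intro conjI allI impI)
  fix U assume "openin (disjoint_union_topology T1 T2) U"
  then have "openin T2 (Inr -` U)" by (simp add: openin_du)
  moreover have "{x \<in> topspace T2. Inr x \<in> U} = Inr -` U"
    using openin_subset[OF \<open>openin T2 (Inr -` U)\<close>] by auto
  ultimately show "openin T2 {x \<in> topspace T2. Inr x \<in> U}" by simp
qed (auto simp: topspace_du)

lemma continuous_map_from_du:
  assumes c1: "continuous_map T1 Y (g \<circ> Inl)" and c2: "continuous_map T2 Y (g \<circ> Inr)"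
  shows "continuous_map (disjoint_union_topology T1 T2) Y g"
  unfolding continuous_map_def
proof (intro conjI allI impI)
  show "g \<in> topspace (disjoint_union_topology T1 T2) \<rightarrow> topspace Y"
    using c1 c2 by (auto simp: topspace_du continuous_map_def)
next
  fix U assume U: "openin Y U"
  have "Inl -` {x \<in> topspace (disjoint_union_topology T1 T2). g x \<in> U} = {x \<in> topspace T1. (g \<circ> Inl) x \<in> U}"
    by (auto simp: topspace_du)
  moreover have "Inr -` {x \<in> topspace (disjoint_union_topology T1 T2). g x \<in> U} = {x \<in> topspace T2. (g \<circ> Inr) x \<in> U}"
    by (auto simp: topspace_du)
  ultimately show "openin (disjoint_union_topology T1 T2) {x \<in> topspace (disjoint_union_topology T1 T2). g x \<in> U}"
    using c1 c2 U unfolding openin_du by (auto simp: continuous_map_def topspace_du)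
qed




lemma fp_inl_closed: "a \<in> carrier G1 \<Longrightarrow> fp_inl G1 a \<in> carrier (free_product G1 G2)"
  by (simp add: fp_inl_def fp_carrier_Nil fp_carrier_Cons fp_letter_ok_def)

lemma fp_inr_closed: "b \<in> carrier G2 \<Longrightarrow> fp_inr G2 b \<in> carrier (free_product G1 G2)"
  by (simp add: fp_inr_def fp_carrier_Nil fp_carrier_Cons fp_letter_ok_def)

lemma fp_inl_hom:
  assumes G1: "group G1"
  shows "fp_inl G1 \<in> hom G1 (free_product G1 G2)"
proof (rule homI)
  fix a assume "a \<in> carrier G1" then show "fp_inl G1 a \<in> carrier (free_product G1 G2)" by (rule fp_inl_closed)
next
  fix a b assume a: "a \<in> carrier G1" and b: "b \<in> carrier G1"
  interpret G: group G1 by (rule G1)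
  show "fp_inl G1 (a \<otimes>\<^bsub>G1\<^esub> b) = fp_inl G1 a \<otimes>\<^bsub>free_product G1 G2\<^esub> fp_inl G1 b"
  proof (cases "a = \<one>\<^bsub>G1\<^esub>")
    case True then show ?thesis using b by (simp add: fp_inl_def fp_mult)
  next
    case a1: False
    show ?thesis
    proof (cases "b = \<one>\<^bsub>G1\<^esub>")
      case True then show ?thesis using a a1 by (simp add: fp_inl_def fp_mult fp_cons_simps)
    next
      case False then show ?thesis using a a1 by (simp add: fp_inl_def fp_mult fp_cons_simps)
    qed
  qed
qed

lemma fp_inr_hom:
  assumes G2: "group G2"
  shows "fp_inr G2 \<in> hom G2 (free_product G1 G2)"
proof (rule homI)
  fix a assume "a \<in> carrier G2" then show "fp_inr G2 a \<in> carrier (free_product G1 G2)" by (rule fp_inr_closed)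
next
  fix a b assume a: "a \<in> carrier G2" and b: "b \<in> carrier G2"
  interpret G: group G2 by (rule G2)
  show "fp_inr G2 (a \<otimes>\<^bsub>G2\<^esub> b) = fp_inr G2 a \<otimes>\<^bsub>free_product G1 G2\<^esub> fp_inr G2 b"
  proof (cases "a = \<one>\<^bsub>G2\<^esub>")
    case True then show ?thesis using b by (simp add: fp_inr_def fp_mult)
  next
    case a1: False
    show ?thesis
    proof (cases "b = \<one>\<^bsub>G2\<^esub>")
      case True then show ?thesis using a a1 by (simp add: fp_inr_def fp_mult fp_cons_simps)
    next
      case False then show ?thesis using a a1 by (simp add: fp_inr_def fp_mult fp_cons_simps)
    qed
  qed
qed

lemma FM_props:
  "group_topology (free_group (topspace S)) (FM_top S) \<and> continuous_map S (FM_top S) fg_gen \<and>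
   (\<forall>T'. group_topology (free_group (topspace S)) T' \<and> continuous_map S T' fg_gen \<longrightarrow>
      (\<forall>U. openin T' U \<longrightarrow> openin (FM_top S) U))"
proof -
  let ?F = "free_group (topspace S)"
  let ?P = "\<lambda>T. continuous_map S T fg_gen"
  have g0: "group_topology ?F (indiscrete (carrier ?F))"
    by (rule group_topology_indiscrete[OF free_group_is_group])
  have p0: "continuous_map S (indiscrete (carrier ?F)) fg_gen"
    unfolding continuous_map_indiscrete by (rule Pi_I, rule fg_gen_closed)
  have ne: "{T. group_topology ?F T \<and> ?P T} \<noteq> {}" using g0 p0 by blast
  have top: "\<forall>T\<in>{T. group_topology ?F T \<and> ?P T}. topspace T = carrier ?F"
    by (auto simp: group_topology_def)
  have pj: "continuous_map S (tjoin {T. group_topology ?F T \<and> ?P T}) fg_gen"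
    by (rule continuous_map_tjoin[OF ne top]) blast
  show ?thesis
    using finest_group_topology_props[of ?F "indiscrete (carrier ?F)" ?P, OF g0 p0 pj]
    unfolding FM_top_def by simp
qed

lemma FTP_props:
  assumes G1: "group G1" and G2: "group G2" and S1: "topspace S1 = carrier G1" and S2: "topspace S2 = carrier G2"
  shows "group_topology (free_product G1 G2) (free_top_product G1 S1 G2 S2) \<and>
   (continuous_map S1 (free_top_product G1 S1 G2 S2) (fp_inl G1) \<and> continuous_map S2 (free_top_product G1 S1 G2 S2) (fp_inr G2)) \<and>
   (\<forall>T'. group_topology (free_product G1 G2) T' \<and> (continuous_map S1 T' (fp_inl G1) \<and> continuous_map S2 T' (fp_inr G2)) \<longrightarrow>
      (\<forall>U. openin T' U \<longrightarrow> openin (free_top_product G1 S1 G2 S2) U))"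
proof -
  let ?P = "free_product G1 G2"
  let ?Q = "\<lambda>T. continuous_map S1 T (fp_inl G1) \<and> continuous_map S2 T (fp_inr G2)"
  have gP: "group ?P" by (rule free_product_is_group[OF G1 G2])
  have c: "continuous_map S1 (indiscrete (carrier ?P)) (fp_inl G1) \<and> continuous_map S2 (indiscrete (carrier ?P)) (fp_inr G2)"
    unfolding continuous_map_indiscrete S1 S2 by (intro conjI Pi_I fp_inl_closed fp_inr_closed)
  have g0: "group_topology ?P (indiscrete (carrier ?P))" by (rule group_topology_indiscrete[OF gP])
  let ?T = "{T. group_topology ?P T \<and> ?Q T}"
  have ne: "?T \<noteq> {}" using c g0 by blast
  have top: "\<forall>T\<in>?T. topspace T = carrier ?P" by (auto simp: group_topology_def)
  have pj: "?Q (tjoin ?T)"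
    by (intro conjI continuous_map_tjoin[OF ne top]) auto
  show ?thesis
    using finest_group_topology_props[of ?P "indiscrete (carrier ?P)" ?Q, OF g0 c pj]
    unfolding free_top_product_def by simp
qed

lemma FM_gt: "group_topology (free_group (topspace S)) (FM_top S)"
  using FM_props[of S] by (rule conjunct1)
lemma FM_gen: "continuous_map S (FM_top S) fg_gen"
  using FM_props[of S] by (rule conjunct1[OF conjunct2])
lemma FM_fin: "group_topology (free_group (topspace S)) T' \<Longrightarrow> continuous_map S T' fg_gen \<Longrightarrow> openin T' U \<Longrightarrow> openin (FM_top S) U"
  using FM_props[of S] by (simp only: conjunct2[OF conjunct2])
lemma FM_top: "topspace (FM_top S) = carrier (free_group (topspace S))"
  using FM_gt[of S] by (simp add: group_topology_def)

lemma FM_universal: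
  assumes H: "group H" and h: "h \<in> hom (free_group (topspace S)) H" and TH: "group_topology H TH"
    and c: "continuous_map S TH (h \<circ> fg_gen)"
  shows "continuous_map (FM_top S) TH h"
proof -
  let ?F = "free_group (topspace S)"
  have gF: "group ?F" by (rule free_group_is_group)
  let ?PB = "pullback_topology (carrier ?F) h TH"
  have gPB: "group_topology ?F ?PB" by (rule group_topology_pullback[OF gF H h TH])
  have cPB: "continuous_map S ?PB fg_gen"
    by (rule continuous_map_pullback'[OF c]) (auto simp: fg_gen_closed)
  have fin: "openin (FM_top S) U" if "openin ?PB U" for U
    by (rule FM_fin[OF gPB cPB that])
  have tFM: "topspace (FM_top S) = carrier ?F" by (rule FM_top)
  have tTH: "topspace TH = carrier H" using TH by (simp add: group_topology_def)
  show ?thesis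
    by (rule continuous_map_from_finer_pullback[OF tFM]) (use hom_in_carrier[OF h] tTH fin in auto)
qed

lemma tau_props:
  assumes G: "group G" and T: "topspace T = carrier G"
  shows "topspace (tau_top G T) = carrier G \<and> continuous_map T (tau_top G T) (\<lambda>x. x)"
proof -
  let ?F = "free_group (topspace T)"
  let ?m = "free_ext G id"
  have mh: "?m \<in> hom ?F G" by (rule free_ext_hom[OF G]) (simp add: T)
  have tFM: "topspace (FM_top T) = carrier ?F" by (rule FM_top)
  have tt: "topspace (tau_top G T) = carrier G"
    unfolding tau_top_def by (rule topspace_quotient_topology) (use hom_in_carrier[OF mh] tFM in auto)
  have "continuous_map T (tau_top G T) (\<lambda>x. x)"
    unfolding continuous_map_def
  proof (intro conjI allI impI)
    show "(\<lambda>x. x) \<in> topspace T \<rightarrow> topspace (tau_top G T)" using tt T by simp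
  next
    fix U assume "openin (tau_top G T) U"
    then have U: "U \<subseteq> carrier G" and o: "openin (FM_top T) {w \<in> topspace (FM_top T). ?m w \<in> U}"
      unfolding tau_top_def openin_quotient_topology by auto
    have "openin T {x \<in> topspace T. fg_gen x \<in> {w \<in> topspace (FM_top T). ?m w \<in> U}}"
      using FM_gen[of T] o by (auto simp: continuous_map_def)
    moreover have "{x \<in> topspace T. fg_gen x \<in> {w \<in> topspace (FM_top T). ?m w \<in> U}} = {x \<in> topspace T. x \<in> U}"
      using free_ext_gen[OF G, of id] T tFM fg_gen_closed by auto
    ultimately show "openin T {x \<in> topspace T. x \<in> U}" by simp
  qed
  with tt show ?thesis by simp
qed




lemma fp_cons_noncancel:
  assumes "l # ws \<in> carrier (free_product G1 G2)"
  shows "fp_cons G1 G2 l ws = l # ws"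
proof (cases l)
  case (Inl a)
  have "ws = [] \<or> \<not> isl (hd ws)" using assms Inl by (auto simp: fp_carrier_Cons)
  then show ?thesis using Inl by (simp add: fp_cons_Inl_noncancel)
next
  case (Inr b)
  have "ws = [] \<or> isl (hd ws)" using assms Inr by (auto simp: fp_carrier_Cons)
  then show ?thesis using Inr by (simp add: fp_cons_Inr_noncancel)
qed

lemma fg_reduced_map_True: "fg_reduced (map (\<lambda>l. (l, True)) ws)"
proof (induction ws)
  case (Cons a ws)
  then show ?case by (cases ws) auto
qed simp

lemma kappa_word:
  assumes "ws \<in> carrier (free_product G1 G2)"
  shows "free_ext (free_product G1 G2) (case_sum (fp_inl G1) (fp_inr G2)) (map (\<lambda>l. (l, True)) ws) = ws"
  using assms
proof (induction ws)
  case Nil then show ?case by (simp add: free_ext_Nil fp_one)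
next
  case (Cons l ws)
  have l: "fp_letter_ok G1 G2 l" and ws: "ws \<in> carrier (free_product G1 G2)"
    using Cons.prems by (simp_all add: fp_carrier_Cons)
  have "case_sum (fp_inl G1) (fp_inr G2) l = [l]"
    using l by (cases l) (auto simp: fp_letter_ok_def fp_inl_def fp_inr_def)
  then have "free_ext (free_product G1 G2) (case_sum (fp_inl G1) (fp_inr G2)) (map (\<lambda>l. (l, True)) (l # ws))
     = fp_cons G1 G2 l ws"
    using Cons.IH[OF ws] by (simp add: free_ext_Cons fg_letter_def fp_mult)
  also have "\<dots> = l # ws" by (rule fp_cons_noncancel[OF Cons.prems])
  finally show ?case .
qed




theorem proposition3p10:
  fixes G1 :: "'a monoid" and T1 :: "'a topology"
    and G2 :: "'b monoid" and T2 :: "'b topology"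
  assumes "group G1" and "topspace T1 = carrier G1"
    and "group G2" and "topspace T2 = carrier G2"
  shows "quotient_map
           (FM_top (disjoint_union_topology T1 T2))
           (free_top_product G1 (tau_top G1 T1) G2 (tau_top G2 T2))
           (free_ext (free_product G1 G2) (case_sum (fp_inl G1) (fp_inr G2)))"
proof -
  note G1 = assms(1) and tT1 = assms(2) and G2 = assms(3) and tT2 = assms(4)
  define S where "S = disjoint_union_topology T1 T2"
  define A where "A = topspace S"
  have A: "A = Inl ` carrier G1 \<union> Inr ` carrier G2" unfolding A_def S_def topspace_du tT1 tT2 ..
  define F where "F = free_group A"
  define P where "P = free_product G1 G2"
  define \<kappa> where "\<kappa> = free_ext P (case_sum (fp_inl G1) (fp_inr G2))"
  define X where "X = FM_top S"
  define \<tau>1 where "\<tau>1 = tau_top G1 T1"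
  define \<tau>2 where "\<tau>2 = tau_top G2 T2"
  define Y where "Y = free_top_product G1 \<tau>1 G2 \<tau>2"
  have gF: "group F" unfolding F_def by (rule free_group_is_group)
  have gP: "group P" unfolding P_def by (rule free_product_is_group[OF G1 G2])
  have tX: "topspace X = carrier F" unfolding X_def F_def A_def by (rule FM_top)
  have gtX: "group_topology F X" unfolding X_def F_def A_def by (rule FM_gt)
  have t1: "topspace \<tau>1 = carrier G1" and c1: "continuous_map T1 \<tau>1 (\<lambda>x. x)"
    using tau_props[OF G1 tT1] unfolding \<tau>1_def by simp_all
  have t2: "topspace \<tau>2 = carrier G2" and c2: "continuous_map T2 \<tau>2 (\<lambda>x. x)"
    using tau_props[OF G2 tT2] unfolding \<tau>2_def by simp_all
  note FTP = FTP_props[OF G1 G2 t1 t2, folded Y_def P_def]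
  have gtY: "group_topology P Y" using FTP by (rule conjunct1)
  have Yl: "continuous_map \<tau>1 Y (fp_inl G1)" using FTP by simp
  have Yr: "continuous_map \<tau>2 Y (fp_inr G2)" using FTP by simp
  have Yfin: "openin Y U" if "group_topology P T'" "continuous_map \<tau>1 T' (fp_inl G1)"
    "continuous_map \<tau>2 T' (fp_inr G2)" "openin T' U" for T' U
    using FTP that by simp
  have tY: "topspace Y = carrier P" using gtY by (simp add: group_topology_def)
  have fmap: "case_sum (fp_inl G1) (fp_inr G2) \<in> A \<rightarrow> carrier P"
    unfolding A P_def by (auto intro: fp_inl_closed fp_inr_closed)
  have kh: "\<kappa> \<in> hom F P" unfolding \<kappa>_def F_def by (rule free_ext_hom[OF gP fmap])
  interpret kappa: group_hom F P \<kappa> using gF gP kh by (simp add: group_hom_def group_hom_axioms_def)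
  have kgen: "\<kappa> (fg_gen z) = case_sum (fp_inl G1) (fp_inr G2) z" if "z \<in> A" for z
    unfolding \<kappa>_def by (rule free_ext_gen[OF gP]) (use fmap that in auto)
  have surj: "\<kappa> ` carrier F = carrier P"
  proof (intro equalityI subsetI)
    fix y assume "y \<in> \<kappa> ` carrier F" then show "y \<in> carrier P" using kappa.hom_closed by auto
  next
    fix ws assume ws: "ws \<in> carrier P"
    define w where "w = map (\<lambda>l. (l, True)) ws"
    have "fst ` set w \<subseteq> A"
    proof
      fix z assume "z \<in> fst ` set w"
      then have "z \<in> set ws" unfolding w_def by auto
      then have "fp_letter_ok G1 G2 z" using ws fp_carrier_letters unfolding P_def by blast
      then show "z \<in> A" unfolding A by (cases z) (auto simp: fp_letter_ok_def)
    qed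
    then have "w \<in> carrier F" unfolding F_def fg_carrier w_def using fg_reduced_map_True by simp
    moreover have "\<kappa> w = ws" unfolding \<kappa>_def w_def P_def by (rule kappa_word[OF ws[unfolded P_def]])
    ultimately show "ws \<in> \<kappa> ` carrier F" by (auto intro: image_eqI[of _ _ w])
  qed
  have kcont: "continuous_map X Y \<kappa>"
    unfolding X_def
  proof (rule FM_universal[OF gP kh[unfolded F_def A_def] gtY])
    have "continuous_map S Y (case_sum (fp_inl G1) (fp_inr G2))"
      unfolding S_def
    proof (rule continuous_map_from_du)
      have "continuous_map T1 Y (fp_inl G1 \<circ> (\<lambda>x. x))" by (rule continuous_map_compose[OF c1 Yl])
      then show "continuous_map T1 Y (case_sum (fp_inl G1) (fp_inr G2) \<circ> Inl)" by (simp add: o_def)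
      have "continuous_map T2 Y (fp_inr G2 \<circ> (\<lambda>x. x))" by (rule continuous_map_compose[OF c2 Yr])
      then show "continuous_map T2 Y (case_sum (fp_inl G1) (fp_inr G2) \<circ> Inr)" by (simp add: o_def)
    qed
    then show "continuous_map S Y (\<kappa> \<circ> fg_gen)"
      by (rule continuous_map_eq) (simp add: kgen A_def)
  qed
  define Q where "Q = quotient_topology X \<kappa> (carrier P)"
  have gtQ: "group_topology P Q"
    unfolding Q_def using quotient_group_topology[OF gF gP kh surj gtX] by (rule conjunct1)
  have oQ: "openin Q U \<longleftrightarrow> U \<subseteq> carrier P \<and> openin X {x \<in> carrier F. \<kappa> x \<in> U}" for U
    unfolding Q_def openin_quotient_topology tX ..
  have Ql: "continuous_map \<tau>1 Q (fp_inl G1)"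
  proof -
    define F1 where "F1 = free_group (topspace T1)"
    have gF1: "group F1" unfolding F1_def by (rule free_group_is_group)
    define j where "j = free_ext F (\<lambda>x. fg_gen (Inl x))"
    have jmap: "(\<lambda>x. fg_gen (Inl x)) \<in> topspace T1 \<rightarrow> carrier F"
      unfolding F_def A tT1 by (auto intro: fg_gen_closed)
    have jh: "j \<in> hom F1 F" unfolding j_def F1_def by (rule free_ext_hom[OF gF jmap])
    have jcont: "continuous_map (FM_top T1) X j"
      unfolding F1_def
    proof (rule FM_universal[OF gF jh[unfolded F1_def] gtX])
      have "continuous_map T1 X (fg_gen \<circ> Inl)"
        unfolding X_def S_def by (rule continuous_map_compose[OF continuous_map_Inl_du FM_gen])
      then show "continuous_map T1 X (j \<circ> fg_gen)"
      proof (rule continuous_map_eq)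
        fix x assume "x \<in> topspace T1"
        then have "fg_gen (Inl x) \<in> carrier F" using jmap by auto
        then show "(fg_gen \<circ> Inl) x = (j \<circ> fg_gen) x"
          using free_ext_gen[OF gF, of "\<lambda>x. fg_gen (Inl x)" x] by (simp add: j_def)
      qed
    qed
    define m1 where "m1 = free_ext G1 (id :: 'a \<Rightarrow> 'a)"
    have m1h: "m1 \<in> hom F1 G1" unfolding m1_def F1_def by (rule free_ext_hom[OF G1]) (simp add: tT1)
    have tFM1: "topspace (FM_top T1) = carrier F1" unfolding F1_def by (rule FM_top)
    have key: "fp_inl G1 (m1 w) = \<kappa> (j w)" if w: "w \<in> carrier F1" for w
    proof -
      have wl: "\<forall>l\<in>set w. fst l \<in> carrier G1" using w unfolding F1_def fg_carrier tT1 by auto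
      have "fp_inl G1 (m1 w) = free_ext P (fp_inl G1 \<circ> id) w"
        unfolding m1_def P_def by (rule free_ext_hom_comp[OF G1 gP[unfolded P_def] fp_inl_hom[OF G1]]) (use wl in simp)
      also have "\<dots> = free_ext P (\<kappa> \<circ> (\<lambda>x. fg_gen (Inl x))) w"
        by (rule free_ext_cong) (use wl A kgen in simp)
      also have "\<dots> = \<kappa> (j w)"
        unfolding j_def by (rule free_ext_hom_comp[OF gF gP kh, symmetric]) (use wl jmap tT1 in auto)
      finally show ?thesis .
    qed
    show ?thesis
      unfolding continuous_map_def
    proof (intro conjI allI impI)
      show "fp_inl G1 \<in> topspace \<tau>1 \<rightarrow> topspace Q"
        using t1 gtQ by (auto simp: group_topology_def P_def intro: fp_inl_closed)
    next
      fix U assume "openin Q U"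
      then have UP: "U \<subseteq> carrier P" and Uo: "openin X {x \<in> carrier F. \<kappa> x \<in> U}" using oQ by auto
      have "openin (FM_top T1) {w \<in> topspace (FM_top T1). j w \<in> {x \<in> carrier F. \<kappa> x \<in> U}}"
        using jcont Uo tX by (auto simp: continuous_map_def)
      moreover have "{w \<in> topspace (FM_top T1). j w \<in> {x \<in> carrier F. \<kappa> x \<in> U}} =
          {w \<in> topspace (FM_top T1). m1 w \<in> {a \<in> topspace \<tau>1. fp_inl G1 a \<in> U}}"
      proof (intro Collect_cong conj_cong refl)
        fix w assume "w \<in> topspace (FM_top T1)"
        then have w: "w \<in> carrier F1" using tFM1 by simp
        have "j w \<in> carrier F" using hom_in_carrier[OF jh w] .
        moreover have "m1 w \<in> topspace \<tau>1" using hom_in_carrier[OF m1h w] t1 by simp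
        ultimately show "(j w \<in> {x \<in> carrier F. \<kappa> x \<in> U}) = (m1 w \<in> {a \<in> topspace \<tau>1. fp_inl G1 a \<in> U})"
          using key[OF w] by simp
      qed
      ultimately have "openin (FM_top T1) {w \<in> topspace (FM_top T1). m1 w \<in> {a \<in> topspace \<tau>1. fp_inl G1 a \<in> U}}"
        by simp
      moreover have "{a \<in> topspace \<tau>1. fp_inl G1 a \<in> U} \<subseteq> carrier G1" using t1 by auto
      ultimately have oq: "openin (quotient_topology (FM_top T1) m1 (carrier G1)) {a \<in> topspace \<tau>1. fp_inl G1 a \<in> U}"
        unfolding openin_quotient_topology by (rule conjI[rotated])
      have eq: "quotient_topology (FM_top T1) m1 (carrier G1) = \<tau>1"
        unfolding \<tau>1_def tau_top_def m1_def ..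
      show "openin \<tau>1 {a \<in> topspace \<tau>1. fp_inl G1 a \<in> U}"
        using oq unfolding eq .
    qed
  qed
  have Qr: "continuous_map \<tau>2 Q (fp_inr G2)"
  proof -
    define F1 where "F1 = free_group (topspace T2)"
    have gF1: "group F1" unfolding F1_def by (rule free_group_is_group)
    define j where "j = free_ext F (\<lambda>x. fg_gen (Inr x))"
    have jmap: "(\<lambda>x. fg_gen (Inr x)) \<in> topspace T2 \<rightarrow> carrier F"
      unfolding F_def A tT2 by (auto intro: fg_gen_closed)
    have jh: "j \<in> hom F1 F" unfolding j_def F1_def by (rule free_ext_hom[OF gF jmap])
    have jcont: "continuous_map (FM_top T2) X j"
      unfolding F1_def
    proof (rule FM_universal[OF gF jh[unfolded F1_def] gtX])
      have "continuous_map T2 X (fg_gen \<circ> Inr)"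
        unfolding X_def S_def by (rule continuous_map_compose[OF continuous_map_Inr_du FM_gen])
      then show "continuous_map T2 X (j \<circ> fg_gen)"
      proof (rule continuous_map_eq)
        fix x assume "x \<in> topspace T2"
        then have "fg_gen (Inr x) \<in> carrier F" using jmap by auto
        then show "(fg_gen \<circ> Inr) x = (j \<circ> fg_gen) x"
          using free_ext_gen[OF gF, of "\<lambda>x. fg_gen (Inr x)" x] by (simp add: j_def)
      qed
    qed
    define m1 where "m1 = free_ext G2 (id :: 'b \<Rightarrow> 'b)"
    have m1h: "m1 \<in> hom F1 G2" unfolding m1_def F1_def by (rule free_ext_hom[OF G2]) (simp add: tT2)
    have tFM1: "topspace (FM_top T2) = carrier F1" unfolding F1_def by (rule FM_top)
    have key: "fp_inr G2 (m1 w) = \<kappa> (j w)" if w: "w \<in> carrier F1" for w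
    proof -
      have wl: "\<forall>l\<in>set w. fst l \<in> carrier G2" using w unfolding F1_def fg_carrier tT2 by auto
      have "fp_inr G2 (m1 w) = free_ext P (fp_inr G2 \<circ> id) w"
        unfolding m1_def P_def by (rule free_ext_hom_comp[OF G2 gP[unfolded P_def] fp_inr_hom[OF G2]]) (use wl in simp)
      also have "\<dots> = free_ext P (\<kappa> \<circ> (\<lambda>x. fg_gen (Inr x))) w"
        by (rule free_ext_cong) (use wl A kgen in simp)
      also have "\<dots> = \<kappa> (j w)"
        unfolding j_def by (rule free_ext_hom_comp[OF gF gP kh, symmetric]) (use wl jmap tT2 in auto)
      finally show ?thesis .
    qed
    show ?thesis
      unfolding continuous_map_def
    proof (intro conjI allI impI)
      show "fp_inr G2 \<in> topspace \<tau>2 \<rightarrow> topspace Q"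
        using t2 gtQ by (auto simp: group_topology_def P_def intro: fp_inr_closed)
    next
      fix U assume "openin Q U"
      then have UP: "U \<subseteq> carrier P" and Uo: "openin X {x \<in> carrier F. \<kappa> x \<in> U}" using oQ by auto
      have "openin (FM_top T2) {w \<in> topspace (FM_top T2). j w \<in> {x \<in> carrier F. \<kappa> x \<in> U}}"
        using jcont Uo tX by (auto simp: continuous_map_def)
      moreover have "{w \<in> topspace (FM_top T2). j w \<in> {x \<in> carrier F. \<kappa> x \<in> U}} =
          {w \<in> topspace (FM_top T2). m1 w \<in> {a \<in> topspace \<tau>2. fp_inr G2 a \<in> U}}"
      proof (intro Collect_cong conj_cong refl)
        fix w assume "w \<in> topspace (FM_top T2)"
        then have w: "w \<in> carrier F1" using tFM1 by simp
        have "j w \<in> carrier F" using hom_in_carrier[OF jh w] .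
        moreover have "m1 w \<in> topspace \<tau>2" using hom_in_carrier[OF m1h w] t2 by simp
        ultimately show "(j w \<in> {x \<in> carrier F. \<kappa> x \<in> U}) = (m1 w \<in> {a \<in> topspace \<tau>2. fp_inr G2 a \<in> U})"
          using key[OF w] by simp
      qed
      ultimately have "openin (FM_top T2) {w \<in> topspace (FM_top T2). m1 w \<in> {a \<in> topspace \<tau>2. fp_inr G2 a \<in> U}}"
        by simp
      moreover have "{a \<in> topspace \<tau>2. fp_inr G2 a \<in> U} \<subseteq> carrier G2" using t2 by auto
      ultimately have oq: "openin (quotient_topology (FM_top T2) m1 (carrier G2)) {a \<in> topspace \<tau>2. fp_inr G2 a \<in> U}"
        unfolding openin_quotient_topology by (rule conjI[rotated])
      have eq: "quotient_topology (FM_top T2) m1 (carrier G2) = \<tau>2"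
        unfolding \<tau>2_def tau_top_def m1_def ..
      show "openin \<tau>2 {a \<in> topspace \<tau>2. fp_inr G2 a \<in> U}"
        using oq unfolding eq .
    qed
  qed
  have QY: "openin Y U" if "openin Q U" for U
    by (rule Yfin[OF gtQ Ql Qr that])
  have "quotient_map X Y \<kappa>"
    unfolding quotient_map_def
  proof (intro conjI allI impI)
    show "\<kappa> ` topspace X = topspace Y" using surj tX tY by simp
  next
    fix U assume U: "U \<subseteq> topspace Y"
    show "openin X {x. x \<in> topspace X \<and> \<kappa> x \<in> U} = openin Y U"
    proof
      assume "openin X {x. x \<in> topspace X \<and> \<kappa> x \<in> U}"
      then have "openin Q U" using oQ U tX tY by simp
      then show "openin Y U" by (rule QY)
    next
      assume "openin Y U"
      then show "openin X {x. x \<in> topspace X \<and> \<kappa> x \<in> U}"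
        using kcont by (simp add: continuous_map_def)
    qed
  qed
  then show ?thesis unfolding X_def Y_def S_def \<kappa>_def P_def \<tau>1_def \<tau>2_def .
qed


end
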